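(* Assume $F_L$ and $F_H$ are regular and $F_L$ is supported on $[0,\bar L]$ with $\bar L<\infty$. For $s\in\{L,H\}$ let $r^\star_s$ be the unique solution of $r-\frac{1-F_s(r)}{f_s(r)}=0$. Let $\epsilon$ satisfy $0<\epsilon<r^\star_H-r^\star_L$, and let $\alpha=\min_i\alpha_i>0$. Let $\rho\ge\bar L$ satisfy $1-F_H(\rho)>0$. Define (with $\log$ the natural logarithm) $$n_0\equiv 1+\frac{1.59\,\log\big(2(r^\star_H-r^\star_L)/\epsilon\big)}{1-F_H(\rho)},\qquad T_0\equiv\frac{2(r^\star_H-r^\star_L)}{\epsilon}\left\lceil\frac{n_0-1}{(n-1)\alpha}\right\rceil.$$ Then for all $n\ge n_0$ and $T\ge T_0$ the threshold mechanism ${\cal M}(\rho,r^\star_L,r^\star_H)$ is $\epsilon$-incentive compatible. Moreover, for each $s\in\{L,H\}$, its expected revenue under truthful bidding is at least $(\mathrm{Revenue}({\cal M}_1^s)-\epsilon)\,T$. Here ${\cal M}_1^s$ is the optimal single-round mechanism that knows $s$, which is the second price auction with reserve $r^\star_s$.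
   Context: Setting: a seller sells $T>1$ items, one per round $t=1,\dots,T$, to $n\ge1$ agents. All items share a type $s\in\{L,H\}$, which has prior probabilities $p_L,p_H$. The type $s$ is known to the agents but not to the seller. Conditional on $s$, agent $i$'s valuation $v_i$ is drawn independently from $F_s$ (density $f_s$) and is fixed across rounds. In each round $t$, agent $i$ participates independently (across agents and rounds) with probability $\alpha_i$. It learns its participation indicator $x_{it}$ at the start of round $t$. $T$, $p_L$, $p_H$ and the $\alpha_i$ are common knowledge. Each agent knows only its own valuation. Each round runs a second price auction with reserve $r_t$ among participants: if all bids are below $r_t$ there is no sale; otherwise a highest bidder (ties broken uniformly at random) wins and pays the maximum of $r_t$ and the highest other bid. A bidding strategy maps $v_i$, agent $i$'s own observed history (past reserves and its own participation, bids, allocations, payments) and the current reserve to a bid. Utility is $U_i=\mathbb{E}[\sum_{t=1}^T(v_iq_{it}-p_{it})]$, with $q_{it}$ the allocation indicator and $p_{it}$ the payment. The truthful strategy bids $v_i$ whenever participating. A strategy $B_i$ is an $\epsilon$-best-response to $B_{-i}$ if, for all $s$ and all $v_i$ in the support of $F_s$, $U_i(v_i,s,B_i,B_{-i})\ge U_i(v_i,s,\mathrm{BR},B_{-i})-T\alpha_i\epsilon$, where $\mathrm{BR}$ is a best response. A mechanism is $\epsilon$-incentive compatible if truthful bidding is an $\epsilon$-best-response to truthful bidding by the others, for all $s$ and all $v_i$ in the support of $F_s$. $F_s$ is regular if $F_s(v)$ and $v-(1-F_s(v))/f_s(v)$ are strictly increasing on the support. The threshold mechanism ${\cal M}(\rho,r_L,r_H)$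 uses reserve $r_L$ until some agent bids above $\rho$. In all subsequent rounds the reserve is $r_H$. If no bid exceeds $\rho$, the reserve stays $r_L$ throughout. *)

theory Defs
  imports "HOL-Probability.Probability"
begin

datatype itype = L | H

text \<open>An agent's observation in one round:
  (reserve, participated, own bid (0 if absent), allocated, own payment).\<close>
type_synonym obs = "real \<times> bool \<times> real \<times> bool \<times> real"

text \<open>A bidding strategy: own valuation, own observed history (chronological),
  current reserve \<mapsto> bid.\<close>
type_synonym strategy = "real \<Rightarrow> obs list \<Rightarrow> real \<Rightarrow> real"

text \<open>Bid vector of a round seen by the seller (None = not participating).\<close>
type_synonym bidvec = "nat \<Rightarrow> real option"

text \<open>A reserve rule: seller's history of bid vectors \<mapsto> reserve of the current round.\<close>
type_synonym mechanism = "bidvec list \<Rightarrow> real"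

definition threshold_mech :: "real \<Rightarrow> real \<Rightarrow> real \<Rightarrow> mechanism" where
  "threshold_mech \<rho> rL rH hist =
     (if \<exists>bv \<in> set hist. \<exists>j b. bv j = Some b \<and> b > \<rho> then rH else rL)"

definition truthful :: strategy where
  "truthful v h r = v"

definition sale :: "nat set \<Rightarrow> (nat \<Rightarrow> real) \<Rightarrow> real \<Rightarrow> bool" where
  "sale P b r \<longleftrightarrow> P \<noteq> {} \<and> r \<le> Max (b ` P)"

definition winners :: "nat set \<Rightarrow> (nat \<Rightarrow> real) \<Rightarrow> nat set" where
  "winners P b = {j \<in> P. b j = Max (b ` P)}"

definition price :: "nat set \<Rightarrow> (nat \<Rightarrow> real) \<Rightarrow> real \<Rightarrow> nat \<Rightarrow> real" where
  "price P b r w = (if P - {w} = {} then r else max r (Max (b ` (P - {w}))))"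

text \<open>Expected total of a per-round reward g(winner option, payment) over the k remaining
  rounds, given the realised valuations v, averaging over independent participation
  (agent j participates with probability \<alpha> j) and uniform tie breaking.\<close>
fun exp_total :: "nat \<Rightarrow> (nat \<Rightarrow> real) \<Rightarrow> mechanism \<Rightarrow> (nat \<Rightarrow> strategy) \<Rightarrow> (nat \<Rightarrow> real)
     \<Rightarrow> (nat option \<Rightarrow> real \<Rightarrow> real) \<Rightarrow> nat \<Rightarrow> bidvec list \<Rightarrow> (nat \<Rightarrow> obs list) \<Rightarrow> real" where
  "exp_total n \<alpha> M B v g 0 sh hs = 0"
| "exp_total n \<alpha> M B v g (Suc k) sh hs =
     (\<Sum>P\<in>Pow {..<n}. (\<Prod>j\<in>P. \<alpha> j) * (\<Prod>j\<in>{..<n} - P. 1 - \<alpha> j) *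
       (let r = M sh;
            b = (\<lambda>j. B j (v j) (hs j) r);
            bv = (\<lambda>j. if j \<in> P then Some (b j) else None)
        in if sale P b r then
             (\<Sum>w\<in>winners P b. (1 / real (card (winners P b))) *
                (g (Some w) (price P b r w) +
                 exp_total n \<alpha> M B v g k (sh @ [bv])
                   (\<lambda>j. hs j @ [(r, j \<in> P, if j \<in> P then b j else 0, j = w,
                                 if j = w then price P b r w else 0)])))
           else g None 0 + exp_total n \<alpha> M B v g k (sh @ [bv])
                   (\<lambda>j. hs j @ [(r, j \<in> P, if j \<in> P then b j else 0, False, 0)])))"

definition valdist :: "(itype \<Rightarrow> real \<Rightarrow> real) \<Rightarrow> itype \<Rightarrow> real measure" where
  "valdist f s = density lborel (\<lambda>x. ennreal (f s x))"

definition cdf :: "(itype \<Rightarrow> real \<Rightarrow> real) \<Rightarrow> itype \<Rightarrow> real \<Rightarrow> real" where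
  "cdf f s x = measure (valdist f s) {..x}"

definition msupport :: "real measure \<Rightarrow> real set" where
  "msupport M = {x. \<forall>e>0. measure M (ball x e) > 0}"

definition virtual_value :: "(itype \<Rightarrow> real \<Rightarrow> real) \<Rightarrow> itype \<Rightarrow> real \<Rightarrow> real" where
  "virtual_value f s v = v - (1 - cdf f s v) / f s v"

definition regular :: "(itype \<Rightarrow> real \<Rightarrow> real) \<Rightarrow> itype \<Rightarrow> bool" where
  "regular f s \<longleftrightarrow> strict_mono_on (msupport (valdist f s)) (cdf f s)
                  \<and> strict_mono_on (msupport (valdist f s)) (virtual_value f s)"

definition utility :: "nat \<Rightarrow> (nat \<Rightarrow> real) \<Rightarrow> mechanism \<Rightarrow> nat \<Rightarrow> (itype \<Rightarrow> real \<Rightarrow> real)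
     \<Rightarrow> nat \<Rightarrow> real \<Rightarrow> itype \<Rightarrow> strategy \<Rightarrow> (nat \<Rightarrow> strategy) \<Rightarrow> real" where
  "utility n \<alpha> M T f i vi s Bi B =
     (\<integral>w. exp_total n \<alpha> M (B(i := Bi)) (w(i := vi))
            (\<lambda>ow p. case ow of None \<Rightarrow> 0 | Some j \<Rightarrow> if j = i then vi - p else 0)
            T [] (\<lambda>_. [])
        \<partial>(PiM ({..<n} - {i}) (\<lambda>_. valdist f s)))"

text \<open>Epsilon-best-response (the best-response utility is the supremum over all strategies).\<close>
definition eps_best_response :: "nat \<Rightarrow> (nat \<Rightarrow> real) \<Rightarrow> mechanism \<Rightarrow> nat \<Rightarrow> (itype \<Rightarrow> real \<Rightarrow> real)
     \<Rightarrow> real \<Rightarrow> nat \<Rightarrow> strategy \<Rightarrow> (nat \<Rightarrow> strategy) \<Rightarrow> bool" where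
  "eps_best_response n \<alpha> M T f \<epsilon> i Bi B \<longleftrightarrow>
     (\<forall>s. \<forall>vi \<in> msupport (valdist f s). \<forall>B'.
        utility n \<alpha> M T f i vi s B' B - real T * \<alpha> i * \<epsilon> \<le> utility n \<alpha> M T f i vi s Bi B)"

definition eps_IC :: "nat \<Rightarrow> (nat \<Rightarrow> real) \<Rightarrow> mechanism \<Rightarrow> nat \<Rightarrow> (itype \<Rightarrow> real \<Rightarrow> real)
     \<Rightarrow> real \<Rightarrow> bool" where
  "eps_IC n \<alpha> M T f \<epsilon> \<longleftrightarrow>
     (\<forall>i<n. eps_best_response n \<alpha> M T f \<epsilon> i truthful (\<lambda>_. truthful))"

definition revenue :: "nat \<Rightarrow> (nat \<Rightarrow> real) \<Rightarrow> mechanism \<Rightarrow> nat \<Rightarrow> (itype \<Rightarrow> real \<Rightarrow> real)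
     \<Rightarrow> itype \<Rightarrow> real" where
  "revenue n \<alpha> M T f s =
     (\<integral>v. exp_total n \<alpha> M (\<lambda>_. truthful) v
            (\<lambda>ow p. case ow of None \<Rightarrow> 0 | Some _ \<Rightarrow> p) T [] (\<lambda>_. [])
        \<partial>(PiM {..<n} (\<lambda>_. valdist f s)))"

end

theory Submission
  imports Defs
begin

lemma e_lb: "159/59 \<le> exp (1::real)"
proof -
  have "\<bar>exp 1 - 5837465777 / 2147483648\<bar> \<le> (inverse(2 ^ 32)::real)" by (rule e_approx_32)
  hence a: "- (exp 1 - 5837465777 / 2147483648) \<le> (inverse(2 ^ 32)::real)" by (rule abs_le_D2)
  have b: "inverse (2 ^ 32 :: real) \<le> 1 / 100" by simp
  show ?thesis using a b by linarith
qed

lemma exp_m1_ub: "exp (-1::real) \<le> 59/159"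
proof -
  have "exp (-1::real) = inverse (exp 1)" by (simp add: exp_minus)
  also have "\<dots> \<le> inverse (159/59)" using e_lb by (intro le_imp_inverse_le) auto
  finally show ?thesis by simp
qed

lemma exp_concave_bound:
  assumes "0 \<le> y" "y \<le> (1::real)"
  shows "exp (-y) \<le> 1 - y + y * exp (-1)"
proof -
  have "exp ((1 - y) *\<^sub>R 0 + y *\<^sub>R (-1)) \<le> (1 - y) * exp 0 + y * exp (-1)"
    using assms by (intro convex_onD[OF exp_convex]) auto
  thus ?thesis by simp
qed

lemma sum_ind_min: "(\<Sum>t<T. if t < C then 1 else 0::real) = real (min T C)"
  by (induction T) (auto simp: min_def)

lemma numeric:
  fixes x p m \<alpha>m :: real and C T :: nat and \<alpha> :: "nat \<Rightarrow> real"
  assumes x: "2 < x" and p: "0 < p" "p \<le> 1" and \<alpha>m: "0 < \<alpha>m" "\<alpha>m \<le> 1"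
    and m: "1.59 * ln x / p \<le> m"
    and C: "(1.59 * ln x / p) / (m * \<alpha>m) \<le> real C"
    and J: "finite J" "m \<le> real (card J)" "\<And>j. j \<in> J \<Longrightarrow> \<alpha>m \<le> \<alpha> j \<and> \<alpha> j \<le> 1"
    and T: "x * real C \<le> real T"
  shows "(\<Sum>t<T. \<Prod>j\<in>J. 1 - (1 - (1 - \<alpha> j) ^ t) * p) \<le> 2 * real T / x"
proof -
  define a0 where "a0 = 1.59 * ln x"
  have lnx: "0 < ln x" using x by simp
  have a0pos: "0 < a0" using lnx by (simp add: a0_def)
  have "0 < 1.59 * ln x / p" using lnx p by simp
  hence mpos: "0 < m" using m by linarith
  have mp: "a0 \<le> m * p" using m p by (simp add: a0_def pos_divide_le_eq mult.commute)
  define y where "y = a0 / (m * p)"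
  have y0: "0 < y" "y \<le> 1" using a0pos mpos p mp by (auto simp: y_def)
  have Cy: "y \<le> \<alpha>m * real C"
  proof -
    have "y = (a0 / p) / (m * \<alpha>m) * \<alpha>m" using \<alpha>m by (simp add: y_def mult.commute)
    also have "\<dots> \<le> real C * \<alpha>m" using C \<alpha>m by (intro mult_right_mono) (auto simp: a0_def)
    finally show ?thesis by (simp add: mult.commute)
  qed
  define q where "q = 1 - (1 - (1 - \<alpha>m) ^ C) * p"
  have pw: "(1 - \<alpha>m) ^ C \<le> exp (- y)"
  proof -
    have "(1 - \<alpha>m) ^ C \<le> exp (- \<alpha>m) ^ C"
      using \<alpha>m exp_ge_add_one_self[of "-\<alpha>m"] by (intro power_mono) auto
    also have "\<dots> = exp (- (\<alpha>m * real C))" by (simp add: exp_of_nat_mult[symmetric] mult.commute)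
    also have "\<dots> \<le> exp (- y)" using Cy by simp
    finally show ?thesis .
  qed
  have one_minus: "y * (1 - exp (-1)) \<le> 1 - (1 - \<alpha>m) ^ C"
    using pw exp_concave_bound[of y] y0 by (simp add: algebra_simps)
  have key: "ln x \<le> m * p * (1 - (1 - \<alpha>m) ^ C)"
  proof -
    have "ln x \<le> a0 * (1 - exp (-1))" using exp_m1_ub lnx by (simp add: a0_def algebra_simps)
    also have "\<dots> = m * p * (y * (1 - exp (-1)))" using mpos p by (simp add: y_def)
    also have "\<dots> \<le> m * p * (1 - (1 - \<alpha>m) ^ C)" using one_minus mpos p by (intro mult_left_mono) auto
    finally show ?thesis .
  qed
  have pw1: "(1 - \<alpha>m) ^ C \<le> 1" using \<alpha>m by (intro power_le_one) auto
  have pw0: "0 \<le> (1 - \<alpha>m) ^ C" using \<alpha>m by simp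
  have "(1 - (1 - \<alpha>m) ^ C) * p \<le> 1 * 1" using pw0 pw1 p by (intro mult_mono) auto
  hence q0: "0 \<le> q" by (simp add: q_def)
  have fac01: "\<And>j t. j \<in> J \<Longrightarrow> 0 \<le> 1 - (1 - (1 - \<alpha> j) ^ t) * p \<and> 1 - (1 - (1 - \<alpha> j) ^ t) * p \<le> 1"
  proof -
    fix j t assume j: "j \<in> J"
    have "0 \<le> (1 - \<alpha> j) ^ t" "(1 - \<alpha> j) ^ t \<le> 1" using J(3)[OF j] \<alpha>m by (auto intro: power_le_one)
    moreover have "(1 - (1 - \<alpha> j) ^ t) * p \<le> 1 * 1" using calculation p by (intro mult_mono) auto
    moreover have "0 \<le> (1 - (1 - \<alpha> j) ^ t) * p" using calculation p by simp
    ultimately show "0 \<le> 1 - (1 - (1 - \<alpha> j) ^ t) * p \<and> 1 - (1 - (1 - \<alpha> j) ^ t) * p \<le> 1"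
      by linarith
  qed
  have term_le: "(\<Prod>j\<in>J. 1 - (1 - (1 - \<alpha> j) ^ t) * p) \<le> (if t < C then 1 else 1 / x)" for t
  proof (cases "t < C")
    case True thus ?thesis using fac01 by (simp add: prod_le_1)
  next
    case False
    have "(\<Prod>j\<in>J. 1 - (1 - (1 - \<alpha> j) ^ t) * p) \<le> (\<Prod>j\<in>J. q)"
    proof (rule prod_mono)
      fix j assume j: "j \<in> J"
      have "(1 - \<alpha> j) ^ t \<le> (1 - \<alpha>m) ^ t" using J(3)[OF j] by (intro power_mono) auto
      also have "\<dots> \<le> (1 - \<alpha>m) ^ C" using False \<alpha>m by (intro power_decreasing) auto
      finally have "(1 - \<alpha> j) ^ t \<le> (1 - \<alpha>m) ^ C" .
      thus "0 \<le> 1 - (1 - (1 - \<alpha> j) ^ t) * p \<and> 1 - (1 - (1 - \<alpha> j) ^ t) * p \<le> q"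
        using fac01[OF j, of t] p by (simp add: q_def mult_right_mono)
    qed
    also have "\<dots> = q ^ card J" by simp
    also have "\<dots> \<le> exp (- ((1 - (1 - \<alpha>m) ^ C) * p)) ^ card J"
      using q0 exp_ge_add_one_self[of "- ((1 - (1 - \<alpha>m) ^ C) * p)"] by (intro power_mono) (auto simp: q_def)
    also have "\<dots> = exp (- (real (card J) * ((1 - (1 - \<alpha>m) ^ C) * p)))"
      by (simp add: exp_of_nat_mult[symmetric])
    also have "\<dots> \<le> exp (- (m * ((1 - (1 - \<alpha>m) ^ C) * p)))"
      using J(2) pw1 p by (simp add: mult_right_mono)
    also have "\<dots> \<le> exp (- ln x)" using key by (simp add: mult_ac)
    also have "\<dots> = 1 / x" using x by (simp add: exp_minus inverse_eq_divide)
    finally show ?thesis using False by simp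
  qed
  have "(\<Sum>t<T. \<Prod>j\<in>J. 1 - (1 - (1 - \<alpha> j) ^ t) * p) \<le> (\<Sum>t<T. (if t < C then 1 else 0) + 1 / x)"
  proof (rule sum_mono)
    fix t assume "t \<in> {..<T}"
    have pos: "0 < 1 / x" using x by simp
    show "(\<Prod>j\<in>J. 1 - (1 - (1 - \<alpha> j) ^ t) * p) \<le> (if t < C then 1 else 0) + 1 / x"
    proof (cases "t < C")
      case True
      have "(\<Prod>j\<in>J. 1 - (1 - (1 - \<alpha> j) ^ t) * p) \<le> 1" using term_le[of t] True by simp
      hence "(\<Prod>j\<in>J. 1 - (1 - (1 - \<alpha> j) ^ t) * p) \<le> 1 + 1 / x" using pos by linarith
      thus ?thesis using True by simp
    next
      case False thus ?thesis using term_le[of t] by simp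
    qed
  qed
  also have "\<dots> = real (min T C) + real T / x" by (simp add: sum.distrib sum_ind_min)
  also have "\<dots> \<le> real C + real T / x" by simp
  also have "\<dots> \<le> 2 * real T / x"
  proof -
    have "real C \<le> real T / x" using T x by (simp add: pos_le_divide_eq mult.commute)
    moreover have "2 * real T / x = real T / x + real T / x" by simp
    ultimately show ?thesis by linarith
  qed
  finally show ?thesis .
qed

definition wt :: "nat \<Rightarrow> (nat \<Rightarrow> real) \<Rightarrow> nat set \<Rightarrow> real" where
  "wt n \<alpha> P = (\<Prod>j\<in>P. \<alpha> j) * (\<Prod>j\<in>{..<n} - P. 1 - \<alpha> j)"

lemma wt_nonneg: "(\<And>j. j < n \<Longrightarrow> 0 \<le> \<alpha> j \<and> \<alpha> j \<le> 1) \<Longrightarrow> P \<subseteq> {..<n} \<Longrightarrow> 0 \<le> wt n \<alpha> P"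
  unfolding wt_def by (intro mult_nonneg_nonneg prod_nonneg) auto

lemma wt_sum_prod:
  "(\<Sum>P\<in>Pow {..<n}. wt n \<alpha> P * (\<Prod>j\<in>{..<n}. h j (j \<in> P)))
     = (\<Prod>j\<in>{..<n}. \<alpha> j * h j True + (1 - \<alpha> j) * h j False)"
proof -
  have "(\<Prod>j\<in>{..<n}. \<alpha> j * h j True + (1 - \<alpha> j) * h j False)
     = (\<Sum>X\<in>Pow {..<n}. (\<Prod>j\<in>X. \<alpha> j * h j True) * (\<Prod>j\<in>{..<n}-X. (1 - \<alpha> j) * h j False))"
    by (rule prod_add) simp
  also have "\<dots> = (\<Sum>P\<in>Pow {..<n}. wt n \<alpha> P * (\<Prod>j\<in>{..<n}. h j (j \<in> P)))"
  proof (rule sum.cong[OF refl])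
    fix X assume X: "X \<in> Pow {..<n}"
    hence sub: "X \<subseteq> {..<n}" by auto
    have "(\<Prod>j\<in>{..<n}. h j (j \<in> X)) = (\<Prod>j\<in>{..<n}-X. h j (j \<in> X)) * (\<Prod>j\<in>X. h j (j\<in>X))"
      using sub by (simp add: prod.subset_diff)
    also have "\<dots> = (\<Prod>j\<in>{..<n}-X. h j False) * (\<Prod>j\<in>X. h j True)"
      by (intro arg_cong2[where f="(*)"] prod.cong) auto
    finally show "(\<Prod>j\<in>X. \<alpha> j * h j True) * (\<Prod>j\<in>{..<n}-X. (1 - \<alpha> j) * h j False)
        = wt n \<alpha> X * (\<Prod>j\<in>{..<n}. h j (j \<in> X))"
      by (simp add: wt_def prod.distrib mult_ac)
  qed
  finally show ?thesis ..
qed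

lemma wt_sum_one: "(\<Sum>P\<in>Pow {..<n}. wt n \<alpha> P) = 1"
  using wt_sum_prod[of n \<alpha> "\<lambda>_ _. 1"] by simp

lemma wt_sum_mem:
  assumes "i < n"
  shows "(\<Sum>P\<in>Pow {..<n}. wt n \<alpha> P * (if i \<in> P then c else 0)) = \<alpha> i * c"
proof -
  let ?h = "\<lambda>j b. if j = i then (if b then c else 0) else (1::real)"
  have 1: "\<And>P. (\<Prod>j\<in>{..<n}. ?h j (j \<in> P)) = (if i \<in> P then c else 0)"
    using assms by (subst prod.delta) auto
  have 2: "(\<Prod>j\<in>{..<n}. \<alpha> j * ?h j True + (1 - \<alpha> j) * ?h j False) = (\<Prod>j\<in>{..<n}. if j = i then \<alpha> i * c else 1)"
    by (intro prod.cong) auto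
  show ?thesis using wt_sum_prod[of n \<alpha> ?h] 1 2 assms by (simp add: prod.delta)
qed

lemma wt_sum_avoid:
  "(\<Sum>P\<in>Pow {..<n}. wt n \<alpha> P * (if (\<forall>j\<in>P. \<not> Q j) then 1 else 0))
     = (\<Prod>j\<in>{..<n}. if Q j then 1 - \<alpha> j else 1)"
proof -
  let ?h = "\<lambda>j b. if Q j \<and> b then 0 else (1::real)"
  have 1: "(\<Prod>j\<in>{..<n}. ?h j (j \<in> P)) = (if (\<forall>j\<in>P. \<not> Q j) then 1 else 0)" if "P \<in> Pow {..<n}" for P
  proof (cases "\<forall>j\<in>P. \<not> Q j")
    case True thus ?thesis by (intro trans[OF prod.neutral]) auto
  next
    case False
    then obtain j where "j \<in> P" "Q j" by auto
    thus ?thesis using that by (intro trans[OF prod_zero]) auto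
  qed
  have 2: "(\<Prod>j\<in>{..<n}. \<alpha> j * ?h j True + (1 - \<alpha> j) * ?h j False) = (\<Prod>j\<in>{..<n}. if Q j then 1 - \<alpha> j else 1)"
    by (intro prod.cong) auto
  have "(\<Sum>P\<in>Pow {..<n}. wt n \<alpha> P * (if (\<forall>j\<in>P. \<not> Q j) then 1 else 0))
     = (\<Sum>P\<in>Pow {..<n}. wt n \<alpha> P * (\<Prod>j\<in>{..<n}. ?h j (j \<in> P)))"
    by (intro sum.cong refl) (simp only: 1)
  thus ?thesis using wt_sum_prod[of n \<alpha> ?h] 2 by simp
qed

definition trig :: "real \<Rightarrow> bidvec list \<Rightarrow> bool" where
  "trig \<rho> sh \<longleftrightarrow> (\<exists>bv \<in> set sh. \<exists>j b. bv j = Some b \<and> b > \<rho>)"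

lemma tm_trig: "threshold_mech \<rho> rL rH sh = (if trig \<rho> sh then rH else rL)"
  by (simp add: threshold_mech_def trig_def)

lemma trig_snoc: "trig \<rho> (sh @ [x]) \<longleftrightarrow> trig \<rho> sh \<or> (\<exists>j b. x j = Some b \<and> b > \<rho>)"
  by (auto simp: trig_def)

lemma trig_Nil[simp]: "\<not> trig \<rho> []" by (simp add: trig_def)

definition rew :: "(nat option \<Rightarrow> real \<Rightarrow> real) \<Rightarrow> nat set \<Rightarrow> (nat \<Rightarrow> real) \<Rightarrow> real \<Rightarrow> real" where
  "rew g P b r = (if sale P b r then (\<Sum>w\<in>winners P b. (1 / real (card (winners P b))) * g (Some w) (price P b r w))
                  else g None 0)"

lemma winners_ne:
  assumes "finite P" "sale P b r"
  shows "winners P b \<noteq> {}" "finite (winners P b)" "winners P b \<subseteq> P"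
proof -
  have "P \<noteq> {}" using assms by (simp add: sale_def)
  hence "Max (b ` P) \<in> b ` P" using assms by (intro Max_in) auto
  thus "winners P b \<noteq> {}" by (auto simp: winners_def)
  show "finite (winners P b)" "winners P b \<subseteq> P" using assms by (auto simp: winners_def)
qed

lemma avg_le:
  fixes X :: "'a \<Rightarrow> real"
  assumes "finite W" "W \<noteq> {}" "\<And>w. w \<in> W \<Longrightarrow> X w \<le> c"
  shows "(\<Sum>w\<in>W. (1 / real (card W)) * X w) \<le> c"
proof -
  have "(\<Sum>w\<in>W. (1 / real (card W)) * X w) \<le> (\<Sum>w\<in>W. (1 / real (card W)) * c)"
    using assms by (intro sum_mono mult_left_mono) auto
  also have "\<dots> = c" using assms by simp
  finally show ?thesis .
qed

lemma avg_ge: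
  fixes X :: "'a \<Rightarrow> real"
  assumes "finite W" "W \<noteq> {}" "\<And>w. w \<in> W \<Longrightarrow> c \<le> X w"
  shows "c \<le> (\<Sum>w\<in>W. (1 / real (card W)) * X w)"
proof -
  have "c = (\<Sum>w\<in>W. (1 / real (card W)) * c)" using assms by simp
  also have "\<dots> \<le> (\<Sum>w\<in>W. (1 / real (card W)) * X w)"
    using assms by (intro sum_mono mult_left_mono) auto
  finally show ?thesis .
qed

lemma avg_le2:
  fixes X :: "'a \<Rightarrow> real"
  assumes "finite W" "W \<noteq> {}" "\<And>w. w \<in> W \<Longrightarrow> X w \<le> c"
  shows "(\<Sum>w\<in>W. X w / real (card W)) \<le> c"
  using avg_le[OF assms] by simp

lemma avg_ge2:
  fixes X :: "'a \<Rightarrow> real"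
  assumes "finite W" "W \<noteq> {}" "\<And>w. w \<in> W \<Longrightarrow> c \<le> X w"
  shows "c \<le> (\<Sum>w\<in>W. X w / real (card W))"
  using avg_ge[OF assms] by simp

lemma exp_total_Suc':
  "exp_total n \<alpha> M B v g (Suc k) sh hs =
     (\<Sum>P\<in>Pow {..<n}. wt n \<alpha> P *
       (if sale P (\<lambda>j. B j (v j) (hs j) (M sh)) (M sh) then
          (\<Sum>w\<in>winners P (\<lambda>j. B j (v j) (hs j) (M sh)).
             (1 / real (card (winners P (\<lambda>j. B j (v j) (hs j) (M sh))))) *
             (g (Some w) (price P (\<lambda>j. B j (v j) (hs j) (M sh)) (M sh) w) +
              exp_total n \<alpha> M B v g k (sh @ [\<lambda>j. if j \<in> P then Some (B j (v j) (hs j) (M sh)) else None])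
                (\<lambda>j. hs j @ [(M sh, j \<in> P, if j \<in> P then B j (v j) (hs j) (M sh) else 0, j = w,
                     if j = w then price P (\<lambda>j. B j (v j) (hs j) (M sh)) (M sh) w else 0)])))
        else g None 0 + exp_total n \<alpha> M B v g k (sh @ [\<lambda>j. if j \<in> P then Some (B j (v j) (hs j) (M sh)) else None])
                (\<lambda>j. hs j @ [(M sh, j \<in> P, if j \<in> P then B j (v j) (hs j) (M sh) else 0, False, 0)])))"
  by (simp add: wt_def Let_def)

lemma avg_step_le:
  assumes "finite P" "\<And>w. X w \<le> N" "Y \<le> N"
  shows "(if sale P b r then (\<Sum>w\<in>winners P b. (1 / real (card (winners P b))) * (g (Some w) (price P b r w) + X w))
          else g None 0 + Y) \<le> rew g P b r + N"
proof (cases "sale P b r")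
  case True
  note W = winners_ne[OF assms(1) True]
  show ?thesis using True
    apply (simp add: rew_def distrib_left sum.distrib)
    apply (rule avg_le2[OF W(2,1)])
    using assms by auto
next
  case False thus ?thesis using assms by (simp add: rew_def)
qed

lemma avg_step_ge:
  assumes "finite P" "\<And>w. N \<le> X w" "N \<le> Y"
  shows "rew g P b r + N \<le> (if sale P b r then (\<Sum>w\<in>winners P b. (1 / real (card (winners P b))) * (g (Some w) (price P b r w) + X w))
          else g None 0 + Y)"
proof (cases "sale P b r")
  case True
  note W = winners_ne[OF assms(1) True]
  show ?thesis using True
    apply (simp add: rew_def distrib_left sum.distrib)
    apply (rule avg_ge2[OF W(2,1)])
    using assms by auto
next
  case False thus ?thesis using assms by (simp add: rew_def)
qed

lemma step_le:
  assumes wtnn: "\<And>P. P \<subseteq> {..<n} \<Longrightarrow> 0 \<le> wt n \<alpha> P"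
  and IH: "\<And>P hs'. P \<subseteq> {..<n} \<Longrightarrow>
     exp_total n \<alpha> M B v g k (sh @ [\<lambda>j. if j \<in> P then Some (B j (v j) (hs j) (M sh)) else None]) hs' \<le> N P"
  shows "exp_total n \<alpha> M B v g (Suc k) sh hs \<le>
     (\<Sum>P\<in>Pow {..<n}. wt n \<alpha> P * (rew g P (\<lambda>j. B j (v j) (hs j) (M sh)) (M sh) + N P))"
  unfolding exp_total_Suc'
  apply (rule sum_mono)
  apply (rule mult_left_mono)
   apply (rule avg_step_le)
  using IH wtnn by (auto intro: finite_subset)

lemma step_ge:
  assumes wtnn: "\<And>P. P \<subseteq> {..<n} \<Longrightarrow> 0 \<le> wt n \<alpha> P"
  and IH: "\<And>P hs'. P \<subseteq> {..<n} \<Longrightarrow>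
     N P \<le> exp_total n \<alpha> M B v g k (sh @ [\<lambda>j. if j \<in> P then Some (B j (v j) (hs j) (M sh)) else None]) hs'"
  shows "(\<Sum>P\<in>Pow {..<n}. wt n \<alpha> P * (rew g P (\<lambda>j. B j (v j) (hs j) (M sh)) (M sh) + N P))
     \<le> exp_total n \<alpha> M B v g (Suc k) sh hs"
  unfolding exp_total_Suc'
  apply (rule sum_mono)
  apply (rule mult_left_mono)
   apply (rule avg_step_ge)
  using IH wtnn by (auto intro: finite_subset)


definition gi :: "real \<Rightarrow> nat \<Rightarrow> nat option \<Rightarrow> real \<Rightarrow> real" where
  "gi vi i = (\<lambda>ow p. case ow of None \<Rightarrow> 0 | Some j \<Rightarrow> if j = i then vi - p else 0)"

definition gr :: "nat option \<Rightarrow> real \<Rightarrow> real" where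
  "gr = (\<lambda>ow p. case ow of None \<Rightarrow> 0 | Some _ \<Rightarrow> p)"

lemma price_cong: "(\<And>j. j \<in> P - {w} \<Longrightarrow> b j = b' j) \<Longrightarrow> price P b r w = price P b' r w"
  unfolding price_def by (metis (mono_tags, lifting) image_cong)

lemma price_ge: "r \<le> price P b r w" by (simp add: price_def)

lemma price_mono: "r \<le> r' \<Longrightarrow> price P b r w \<le> price P b r' w \<and> price P b r' w \<le> price P b r w + (r' - r)"
  by (auto simp: price_def max_def)

lemma rew_gi_eq:
  assumes "finite P"
  shows "rew (gi vi i) P b r = (if sale P b r \<and> i \<in> winners P b then (vi - price P b r i) / real (card (winners P b)) else 0)"
proof (cases "sale P b r")
  case True
  note W = winners_ne[OF assms True]
  have "(\<Sum>w\<in>winners P b. (1 / real (card (winners P b))) * gi vi i (Some w) (price P b r w))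
      = (\<Sum>w\<in>winners P b. if w = i then (vi - price P b r i) / real (card (winners P b)) else 0)"
    by (intro sum.cong) (auto simp: gi_def)
  also have "\<dots> = (if i \<in> winners P b then (vi - price P b r i) / real (card (winners P b)) else 0)"
    using W by (simp add: sum.delta)
  finally show ?thesis using True by (simp add: rew_def)
next
  case False thus ?thesis by (simp add: rew_def gi_def)
qed

lemma div_le_max0: "1 \<le> (c::real) \<Longrightarrow> x / c \<le> max 0 x"
proof (cases "0 \<le> x")
  case True
  assume c: "1 \<le> c"
  hence "x / c \<le> x" using True by (simp add: divide_le_eq mult_le_cancel_left1 mult_le_cancel_left2)
  thus ?thesis by simp
next
  case False
  assume c: "1 \<le> c"
  hence "x / c \<le> 0" using False by (simp add: divide_le_0_iff)
  thus ?thesis by simp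
qed

lemma rew_gi_le:
  assumes "finite P"
  shows "rew (gi vi i) P b r \<le> (if i \<in> P then max 0 (vi - price P b r i) else 0)"
proof (cases "sale P b r \<and> i \<in> winners P b")
  case True
  note W = winners_ne[OF assms True[THEN conjunct1]]
  have "1 \<le> real (card (winners P b))" using W by (simp add: Suc_leI card_gt_0_iff)
  thus ?thesis using True W by (simp add: rew_gi_eq[OF assms] div_le_max0 subset_iff)
next
  case False
  have "rew (gi vi i) P b r = 0" by (simp only: rew_gi_eq[OF assms] if_not_P[OF False])
  thus ?thesis by simp
qed

lemma Max_split:
  assumes "finite P" "i \<in> P" "P - {i} \<noteq> {}"
  shows "Max (b ` P) = max (b i) (Max (b ` (P - {i})))"
proof -
  have "P = insert i (P - {i})" using assms by auto
  hence "b ` P = insert (b i) (b ` (P - {i}))" by auto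
  thus ?thesis using assms by (simp add: Max_insert)
qed

lemma rew_gi_truth:
  assumes fin: "finite P" and bi: "b i = vi"
  shows "rew (gi vi i) P b r = (if i \<in> P then max 0 (vi - price P b r i) else 0)"
proof (cases "i \<in> P")
  case False
  hence "i \<notin> winners P b" by (simp add: winners_def)
  thus ?thesis using False by (simp add: rew_gi_eq[OF fin])
next
  case iP: True
  define pr where "pr = price P b r i"
  have Pne: "P \<noteq> {}" using iP by auto
  show ?thesis
  proof (cases "pr \<le> vi")
    case True
    have rv: "r \<le> vi" using price_ge[of r P b i] True pr_def by simp
    have oth: "P - {i} \<noteq> {} \<Longrightarrow> Max (b ` (P - {i})) \<le> pr" by (simp add: pr_def price_def)
    have MaxP: "Max (b ` P) = vi"
    proof (cases "P - {i} = {}")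
      case True hence "P = {i}" using iP by auto
      thus ?thesis using bi by simp
    next
      case False thus ?thesis using Max_split[OF fin iP False, of b] oth True bi by simp
    qed
    have sale: "sale P b r" using Pne rv MaxP by (simp add: sale_def)
    have iW: "i \<in> winners P b" using iP MaxP bi by (simp add: winners_def)
    have "(vi - pr) / real (card (winners P b)) = vi - pr"
    proof (cases "vi = pr")
      case True thus ?thesis by simp
    next
      case False
      have "winners P b = {i}"
      proof (rule ccontr)
        assume "winners P b \<noteq> {i}"
        then obtain j where j: "j \<in> winners P b" "j \<noteq> i" using iW by blast
        hence jP: "j \<in> P - {i}" and bj: "b j = vi" using MaxP by (auto simp: winners_def)
        hence ne: "P - {i} \<noteq> {}" by auto
        have "b j \<le> Max (b ` (P - {i}))" using jP fin by (intro Max_ge) auto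
        thus False using oth[OF ne] bj True False by simp
      qed
      thus ?thesis by simp
    qed
    thus ?thesis using sale iW iP True by (simp add: rew_gi_eq[OF fin] pr_def)
  next
    case False
    have "\<not> (sale P b r \<and> i \<in> winners P b)"
    proof
      assume a: "sale P b r \<and> i \<in> winners P b"
      hence MaxP: "Max (b ` P) = vi" using bi by (simp add: winners_def)
      have rv: "r \<le> vi" using a MaxP by (simp add: sale_def)
      have "pr \<le> vi"
      proof (cases "P - {i} = {}")
        case True thus ?thesis using rv by (simp add: pr_def price_def)
      next
        case ne: False
        have "Max (b ` (P - {i})) \<le> Max (b ` P)" using ne fin by (intro Max_mono) auto
        thus ?thesis using rv ne MaxP by (simp add: pr_def price_def)
      qed
      thus False using False by simp
    qed
    hence "rew (gi vi i) P b r = 0" by (simp only: rew_gi_eq[OF fin] if_not_P if_False)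
    thus ?thesis using iP False by (simp add: pr_def)
  qed
qed


definition S :: "nat \<Rightarrow> (nat \<Rightarrow> real) \<Rightarrow> (nat option \<Rightarrow> real \<Rightarrow> real) \<Rightarrow> (nat \<Rightarrow> real) \<Rightarrow> real \<Rightarrow> real" where
  "S n \<alpha> g b r = (\<Sum>P\<in>Pow {..<n}. wt n \<alpha> P * rew g P b r)"

lemma wsum_mono:
  assumes a01: "\<And>j. j < n \<Longrightarrow> 0 \<le> \<alpha> j \<and> \<alpha> j \<le> 1"
  and "\<And>P. P \<subseteq> {..<n} \<Longrightarrow> X P \<le> Y P"
  shows "(\<Sum>P\<in>Pow {..<n}. wt n \<alpha> P * X P) \<le> (\<Sum>P\<in>Pow {..<n}. wt n \<alpha> P * Y P)"
  using assms by (intro sum_mono mult_left_mono wt_nonneg) auto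

lemma wsum_add3:
  "(\<Sum>P\<in>Pow {..<n}. wt n \<alpha> P * (X P + c + Y P))
     = (\<Sum>P\<in>Pow {..<n}. wt n \<alpha> P * X P) + c + (\<Sum>P\<in>Pow {..<n}. wt n \<alpha> P * Y P)"
proof -
  have "(\<Sum>P\<in>Pow {..<n}. wt n \<alpha> P * c) = c"
    using wt_sum_one[of n \<alpha>] by (simp add: sum_distrib_right[symmetric])
  thus ?thesis by (simp add: distrib_left sum.distrib)
qed

lemma wsum_const: "(\<Sum>P\<in>Pow {..<n}. wt n \<alpha> P * c) = c"
  using wt_sum_one[of n \<alpha>] by (simp add: sum_distrib_right[symmetric])

lemma rew_gi_dev:
  assumes fin: "finite P" and vi: "v i = vi"
  shows "rew (gi vi i) P (v(i := \<beta>)) r \<le> rew (gi vi i) P v r"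
proof -
  have pe: "price P (v(i := \<beta>)) r i = price P v r i" by (rule price_cong) auto
  have a: "rew (gi vi i) P (v(i := \<beta>)) r \<le> (if i \<in> P then max 0 (vi - price P v r i) else 0)"
    using rew_gi_le[OF fin, of vi i "v(i := \<beta>)" r] unfolding pe .
  have b: "rew (gi vi i) P v r = (if i \<in> P then max 0 (vi - price P v r i) else 0)"
    using rew_gi_truth[OF fin, of v i vi r] vi by simp
  show ?thesis using a b by simp
qed

lemma S_gi_dev:
  assumes a01: "\<And>j. j < n \<Longrightarrow> 0 \<le> \<alpha> j \<and> \<alpha> j \<le> 1" and vi: "v i = vi"
  shows "S n \<alpha> (gi vi i) (v(i := \<beta>)) r \<le> S n \<alpha> (gi vi i) v r"
  unfolding S_def
proof (rule wsum_mono[OF a01])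
  fix P :: "nat set" assume P: "P \<subseteq> {..<n}"
  hence fin: "finite P" by (meson finite_lessThan finite_subset)
  show "rew (gi vi i) P (v(i := \<beta>)) r \<le> rew (gi vi i) P v r"
    by (rule rew_gi_dev[where v=v and i=i and vi=vi, OF fin vi])
qed

lemma S_gi_mono:
  assumes a01: "\<And>j. j < n \<Longrightarrow> 0 \<le> \<alpha> j \<and> \<alpha> j \<le> 1" and vi: "v i = vi" and i: "i < n"
    and r: "rL \<le> rH"
  shows "S n \<alpha> (gi vi i) v rH \<le> S n \<alpha> (gi vi i) v rL"
    "S n \<alpha> (gi vi i) v rL \<le> S n \<alpha> (gi vi i) v rH + \<alpha> i * (rH - rL)"
proof -
  have fin: "\<And>P. P \<subseteq> {..<n} \<Longrightarrow> finite P" by (meson finite_lessThan finite_subset)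
  have pm: "\<And>P. price P v rL i \<le> price P v rH i \<and> price P v rH i \<le> price P v rL i + (rH - rL)"
    using price_mono[OF r] by blast
  show "S n \<alpha> (gi vi i) v rH \<le> S n \<alpha> (gi vi i) v rL"
    unfolding S_def
  proof (rule wsum_mono[OF a01])
    fix P :: "nat set" assume P: "P \<subseteq> {..<n}"
    show "rew (gi vi i) P v rH \<le> rew (gi vi i) P v rL"
      using rew_gi_truth[OF fin[OF P], of v i vi] vi pm[of P] by auto
  qed
  have "S n \<alpha> (gi vi i) v rL \<le> (\<Sum>P\<in>Pow {..<n}. wt n \<alpha> P * (rew (gi vi i) P v rH + 0 + (if i \<in> P then rH - rL else 0)))"
    unfolding S_def
  proof (rule wsum_mono[OF a01])
    fix P :: "nat set" assume P: "P \<subseteq> {..<n}"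
    show "rew (gi vi i) P v rL \<le> rew (gi vi i) P v rH + 0 + (if i \<in> P then rH - rL else 0)"
      using rew_gi_truth[OF fin[OF P], of v i vi] vi pm[of P] by auto
  qed
  also have "\<dots> = S n \<alpha> (gi vi i) v rH + \<alpha> i * (rH - rL)"
    by (simp only: wsum_add3 wt_sum_mem[OF i] S_def)
  finally show "S n \<alpha> (gi vi i) v rL \<le> S n \<alpha> (gi vi i) v rH + \<alpha> i * (rH - rL)" .
qed

lemma rew_gr_nonneg:
  assumes "finite P" "0 \<le> r"
  shows "0 \<le> rew gr P b r"
proof (cases "sale P b r")
  case True
  note W = winners_ne[OF assms(1) True]
  have "0 \<le> (\<Sum>w\<in>winners P b. (1 / real (card (winners P b))) * price P b r w)"
    using assms price_ge[of r P b] by (intro sum_nonneg mult_nonneg_nonneg) (auto intro: order_trans)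
  thus ?thesis using True by (simp add: rew_def gr_def)
next
  case False thus ?thesis by (simp add: rew_def gr_def)
qed

lemma rew_gr_mono:
  assumes fin: "finite P" and r: "0 \<le> rL" "rL \<le> rH"
  shows "rew gr P b rH - (rH - rL) \<le> rew gr P b rL" "rew gr P b rL \<le> rew gr P b rH + rH"
proof -
  have nn: "0 \<le> rew gr P b rL" "0 \<le> rew gr P b rH" using rew_gr_nonneg[OF fin] r by auto
  have pm: "\<And>w. price P b rL w \<le> price P b rH w \<and> price P b rH w \<le> price P b rL w + (rH - rL)"
    using price_mono[OF r(2)] by blast
  show "rew gr P b rH - (rH - rL) \<le> rew gr P b rL"
  proof (cases "sale P b rH")
    case True
    hence sL: "sale P b rL" using r by (auto simp: sale_def)
    note W = winners_ne[OF fin True]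
    have "(\<Sum>w\<in>winners P b. (1 / real (card (winners P b))) * price P b rH w) - (rH - rL)
       = (\<Sum>w\<in>winners P b. (1 / real (card (winners P b))) * (price P b rH w - (rH - rL)))"
      using W by (simp add: right_diff_distrib sum_subtractf)
    also have "\<dots> \<le> (\<Sum>w\<in>winners P b. (1 / real (card (winners P b))) * price P b rL w)"
      using pm by (intro sum_mono mult_left_mono) (auto simp: algebra_simps)
    finally show ?thesis using True sL by (simp add: rew_def gr_def)
  next
    case False thus ?thesis using nn r by (simp add: rew_def gr_def)
  qed
  show "rew gr P b rL \<le> rew gr P b rH + rH"
  proof (cases "sale P b rH")
    case True
    hence sL: "sale P b rL" using r by (auto simp: sale_def)
    have "(\<Sum>w\<in>winners P b. (1 / real (card (winners P b))) * price P b rL w)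
        \<le> (\<Sum>w\<in>winners P b. (1 / real (card (winners P b))) * price P b rH w)"
      using pm by (intro sum_mono mult_left_mono) auto
    thus ?thesis using True sL r nn by (simp add: rew_def gr_def)
  next
    case False
    show ?thesis
    proof (cases "sale P b rL")
      case sL: True
      note W = winners_ne[OF fin sL]
      have Pne: "P \<noteq> {}" using sL by (simp add: sale_def)
      have lt: "Max (b ` P) < rH" using False Pne by (simp add: sale_def)
      have "\<And>w. w \<in> winners P b \<Longrightarrow> price P b rL w \<le> rH"
      proof -
        fix w assume "w \<in> winners P b"
        show "price P b rL w \<le> rH"
        proof (cases "P - {w} = {}")
          case True thus ?thesis using r by (simp add: price_def)
        next
          case ne: False
          have "Max (b ` (P - {w})) \<le> Max (b ` P)" using ne fin by (intro Max_mono) auto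
          thus ?thesis using ne lt r by (simp add: price_def)
        qed
      qed
      hence "(\<Sum>w\<in>winners P b. (1 / real (card (winners P b))) * price P b rL w) \<le> rH"
        using W by (intro avg_le) auto
      thus ?thesis using sL False nn by (simp add: rew_def gr_def)
    next
      case False thus ?thesis using nn r by (simp add: rew_def gr_def)
    qed
  qed
qed


lemma wsum_add2:
  "(\<Sum>P\<in>Pow {..<n}. wt n \<alpha> P * (X P + c)) = (\<Sum>P\<in>Pow {..<n}. wt n \<alpha> P * X P) + c"
  using wsum_add3[of n \<alpha> X c "\<lambda>_. 0"] by simp

lemma S_gr_mono:
  assumes a01: "\<And>j. j < n \<Longrightarrow> 0 \<le> \<alpha> j \<and> \<alpha> j \<le> 1" and r: "0 \<le> rL" "rL \<le> rH"
  shows "S n \<alpha> gr b rH - (rH - rL) \<le> S n \<alpha> gr b rL" "S n \<alpha> gr b rL \<le> S n \<alpha> gr b rH + rH"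
    "0 \<le> S n \<alpha> gr b rL" "0 \<le> S n \<alpha> gr b rH"
proof -
  have fin: "\<And>P. P \<subseteq> {..<n} \<Longrightarrow> finite P" by (meson finite_lessThan finite_subset)
  have "S n \<alpha> gr b rH - (rH - rL) = (\<Sum>P\<in>Pow {..<n}. wt n \<alpha> P * (rew gr P b rH + - (rH - rL)))"
    by (simp only: wsum_add2 S_def)
  also have "\<dots> \<le> S n \<alpha> gr b rL" unfolding S_def
  proof (rule wsum_mono[OF a01])
    fix P :: "nat set" assume P: "P \<subseteq> {..<n}"
    show "rew gr P b rH + - (rH - rL) \<le> rew gr P b rL" using rew_gr_mono(1)[OF fin[OF P] r, of b] by linarith
  qed
  finally show "S n \<alpha> gr b rH - (rH - rL) \<le> S n \<alpha> gr b rL" .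
  have "S n \<alpha> gr b rL \<le> (\<Sum>P\<in>Pow {..<n}. wt n \<alpha> P * (rew gr P b rH + rH))" unfolding S_def
  proof (rule wsum_mono[OF a01])
    fix P :: "nat set" assume P: "P \<subseteq> {..<n}"
    show "rew gr P b rL \<le> rew gr P b rH + rH" using rew_gr_mono(2)[OF fin[OF P] r, of b] by linarith
  qed
  thus "S n \<alpha> gr b rL \<le> S n \<alpha> gr b rH + rH" by (simp only: wsum_add2 S_def)
  show "0 \<le> S n \<alpha> gr b rL" "0 \<le> S n \<alpha> gr b rH" unfolding S_def using r
    by (auto intro!: sum_nonneg mult_nonneg_nonneg wt_nonneg[OF a01] rew_gr_nonneg intro: fin)
qed

definition pio :: "nat \<Rightarrow> (nat \<Rightarrow> real) \<Rightarrow> real \<Rightarrow> nat \<Rightarrow> (nat \<Rightarrow> real) \<Rightarrow> real" where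
  "pio n \<alpha> \<rho> i v = (\<Prod>j\<in>{..<n}. if j \<noteq> i \<and> \<rho> < v j then 1 - \<alpha> j else 1)"

definition pia :: "nat \<Rightarrow> (nat \<Rightarrow> real) \<Rightarrow> real \<Rightarrow> (nat \<Rightarrow> real) \<Rightarrow> real" where
  "pia n \<alpha> \<rho> v = (\<Prod>j\<in>{..<n}. if \<rho> < v j then 1 - \<alpha> j else 1)"

lemma sum_pow_Suc: "(\<Sum>t<Suc k. (x::real) ^ t) = 1 + x * (\<Sum>t<k. x ^ t)"
  by (subst sum.lessThan_Suc_shift) (simp add: sum_distrib_left)

lemma bid_dev: "(\<lambda>j. ((\<lambda>_. truthful)(i := Bi)) j (v j) (hs j) r) = v(i := Bi (v i) (hs i) r)"
  by (auto simp: truthful_def)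

lemma bid_dev_pt: "((\<lambda>_. truthful)(i := Bi)) j (v j) (hs j) r = (v(i := Bi (v i) (hs i) r)) j"
  by (simp add: truthful_def)

lemma bid_truth: "(\<lambda>j. truthful (v j) (hs j) r) = v"
  by (simp add: truthful_def)

lemma claimA:
  assumes a01: "\<And>j. j < n \<Longrightarrow> 0 \<le> \<alpha> j \<and> \<alpha> j \<le> 1" and i: "i < n" and vi: "v i = vi" and r: "rL \<le> rH"
  shows "exp_total n \<alpha> (threshold_mech \<rho> rL rH) ((\<lambda>_. truthful)(i := Bi)) v (gi vi i) k sh hs
     \<le> real k * S n \<alpha> (gi vi i) v rH + (if trig \<rho> sh then 0 else \<alpha> i * (rH - rL) * (\<Sum>t<k. pio n \<alpha> \<rho> i v ^ t))"
proof (induction k arbitrary: sh hs)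
  case 0 thus ?case by simp
next
  case (Suc k)
  have wtnn: "\<And>P. P \<subseteq> {..<n} \<Longrightarrow> 0 \<le> wt n \<alpha> P" by (rule wt_nonneg) (auto simp: a01)
  define \<pi> where "\<pi> = pio n \<alpha> \<rho> i v"
  define D where "D = \<alpha> i * (rH - rL) * (\<Sum>t<k. \<pi> ^ t)"
  define r where "r = threshold_mech \<rho> rL rH sh"
  define b where "b = v(i := Bi (v i) (hs i) r)"
  have fin: "\<And>P. P \<subseteq> {..<n} \<Longrightarrow> finite P" by (meson finite_lessThan finite_subset)
  have \<pi>0: "0 \<le> \<pi>" unfolding \<pi>_def pio_def using a01 by (intro prod_nonneg) auto
  have D0: "0 \<le> D" unfolding D_def using a01[OF i] r \<pi>0 by (intro mult_nonneg_nonneg sum_nonneg) auto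
  have 1: "exp_total n \<alpha> (threshold_mech \<rho> rL rH) ((\<lambda>_. truthful)(i := Bi)) v (gi vi i) (Suc k) sh hs
     \<le> (\<Sum>P\<in>Pow {..<n}. wt n \<alpha> P * (rew (gi vi i) P (\<lambda>j. ((\<lambda>_. truthful)(i := Bi)) j (v j) (hs j) (threshold_mech \<rho> rL rH sh)) (threshold_mech \<rho> rL rH sh)
        + (real k * S n \<alpha> (gi vi i) v rH + (if trig \<rho> (sh @ [\<lambda>j. if j \<in> P then Some (((\<lambda>_. truthful)(i := Bi)) j (v j) (hs j) (threshold_mech \<rho> rL rH sh)) else None]) then 0 else D))))"
    by (rule step_le[OF wtnn]) (simp_all only: Suc.IH D_def \<pi>_def)
  also have "\<dots> = (\<Sum>P\<in>Pow {..<n}. wt n \<alpha> P * (rew (gi vi i) P b r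
        + real k * S n \<alpha> (gi vi i) v rH + (if trig \<rho> (sh @ [\<lambda>j. if j \<in> P then Some (b j) else None]) then 0 else D)))"
    unfolding r_def[symmetric] bid_dev bid_dev_pt b_def[symmetric] by (simp only: add.assoc)
  also have "\<dots> \<le> (\<Sum>P\<in>Pow {..<n}. wt n \<alpha> P * (rew (gi vi i) P v r
        + real k * S n \<alpha> (gi vi i) v rH + (if trig \<rho> sh then 0 else D * (if (\<forall>j\<in>P. \<not> (j \<noteq> i \<and> \<rho> < v j)) then 1 else 0))))"
  proof (rule wsum_mono[OF a01])
    fix P :: "nat set" assume P: "P \<subseteq> {..<n}"
    have a: "rew (gi vi i) P b r \<le> rew (gi vi i) P v r" unfolding b_def by (rule rew_gi_dev[where v=v and i=i and vi=vi, OF fin[OF P] vi])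
    have c: "(if trig \<rho> (sh @ [\<lambda>j. if j \<in> P then Some (b j) else None]) then 0 else D)
       \<le> (if trig \<rho> sh then 0 else D * (if (\<forall>j\<in>P. \<not> (j \<noteq> i \<and> \<rho> < v j)) then 1 else 0))"
    proof (cases "trig \<rho> sh")
      case True thus ?thesis by (simp add: trig_snoc)
    next
      case False
      show ?thesis
      proof (cases "trig \<rho> (sh @ [\<lambda>j. if j \<in> P then Some (b j) else None])")
        case True thus ?thesis using False D0 by simp
      next
        case nt: False
        hence "\<forall>j\<in>P. \<not> (j \<noteq> i \<and> \<rho> < v j)"
          by (auto simp: trig_snoc b_def split: if_splits)
        thus ?thesis using nt False by simp
      qed
    qed
    show "rew (gi vi i) P b r + real k * S n \<alpha> (gi vi i) v rH + (if trig \<rho> (sh @ [\<lambda>j. if j \<in> P then Some (b j) else None]) then 0 else D)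
      \<le> rew (gi vi i) P v r + real k * S n \<alpha> (gi vi i) v rH + (if trig \<rho> sh then 0 else D * (if (\<forall>j\<in>P. \<not> (j \<noteq> i \<and> \<rho> < v j)) then 1 else 0))"
      using a c by linarith
  qed
  also have "\<dots> = S n \<alpha> (gi vi i) v r + real k * S n \<alpha> (gi vi i) v rH + (if trig \<rho> sh then 0 else D * \<pi>)"
  proof -
    have "(\<Sum>P\<in>Pow {..<n}. wt n \<alpha> P * (if trig \<rho> sh then 0 else D * (if (\<forall>j\<in>P. \<not> (j \<noteq> i \<and> \<rho> < v j)) then 1 else 0)))
        = (if trig \<rho> sh then 0 else D * (\<Sum>P\<in>Pow {..<n}. wt n \<alpha> P * (if (\<forall>j\<in>P. \<not> (j \<noteq> i \<and> \<rho> < v j)) then 1 else 0)))"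
      by (simp add: sum_distrib_left mult_ac)
    also have "\<dots> = (if trig \<rho> sh then 0 else D * \<pi>)"
      by (simp only: wt_sum_avoid \<pi>_def pio_def)
    finally show ?thesis by (simp only: wsum_add3 S_def)
  qed
  also have "\<dots> \<le> real (Suc k) * S n \<alpha> (gi vi i) v rH + (if trig \<rho> sh then 0 else \<alpha> i * (rH - rL) * (\<Sum>t<Suc k. \<pi> ^ t))"
  proof (cases "trig \<rho> sh")
    case True thus ?thesis by (simp add: r_def tm_trig algebra_simps)
  next
    case False
    have "S n \<alpha> (gi vi i) v r \<le> S n \<alpha> (gi vi i) v rH + \<alpha> i * (rH - rL)"
      using S_gi_mono(2)[where v=v and i=i and vi=vi, OF a01 vi i r] False by (simp add: r_def tm_trig)
    thus ?thesis using False unfolding sum_pow_Suc by (simp add: D_def algebra_simps)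
  qed
  finally show ?case by (simp only: \<pi>_def)
qed

lemma claimA':
  assumes a01: "\<And>j. j < n \<Longrightarrow> 0 \<le> \<alpha> j \<and> \<alpha> j \<le> 1" and i: "i < n" and vi: "v i = vi" and r: "rL \<le> rH"
  shows "exp_total n \<alpha> (threshold_mech \<rho> rL rH) ((\<lambda>_. truthful)(i := Bi)) v (gi vi i) k sh hs
     \<le> real k * S n \<alpha> (gi vi i) v rL"
proof (induction k arbitrary: sh hs)
  case 0 thus ?case by simp
next
  case (Suc k)
  have wtnn: "\<And>P. P \<subseteq> {..<n} \<Longrightarrow> 0 \<le> wt n \<alpha> P" by (rule wt_nonneg) (auto simp: a01)
  define r where "r = threshold_mech \<rho> rL rH sh"
  have 1: "exp_total n \<alpha> (threshold_mech \<rho> rL rH) ((\<lambda>_. truthful)(i := Bi)) v (gi vi i) (Suc k) sh hs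
     \<le> (\<Sum>P\<in>Pow {..<n}. wt n \<alpha> P * (rew (gi vi i) P (\<lambda>j. ((\<lambda>_. truthful)(i := Bi)) j (v j) (hs j) (threshold_mech \<rho> rL rH sh)) (threshold_mech \<rho> rL rH sh)
        + real k * S n \<alpha> (gi vi i) v rL))"
    by (rule step_le[OF wtnn]) (simp_all only: Suc.IH)
  also have "\<dots> = S n \<alpha> (gi vi i) (v(i := Bi (v i) (hs i) r)) r + real k * S n \<alpha> (gi vi i) v rL"
    unfolding r_def[symmetric] bid_dev by (simp only: wsum_add2 S_def)
  also have "\<dots> \<le> S n \<alpha> (gi vi i) v r + real k * S n \<alpha> (gi vi i) v rL"
    using S_gi_dev[where v=v and i=i and vi=vi, OF a01 vi] by simp
  also have "\<dots> \<le> real (Suc k) * S n \<alpha> (gi vi i) v rL"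
    using S_gi_mono(1)[where v=v and i=i and vi=vi, OF a01 vi i r] by (cases "trig \<rho> sh") (auto simp: r_def tm_trig algebra_simps)
  finally show ?case .
qed

lemma truth_bounds:
  assumes a01: "\<And>j. j < n \<Longrightarrow> 0 \<le> \<alpha> j \<and> \<alpha> j \<le> 1"
    and lohi: "\<And>r. r = rL \<or> r = rH \<Longrightarrow> lo \<le> S n \<alpha> g v r \<and> S n \<alpha> g v r \<le> hi"
  shows "real k * lo \<le> exp_total n \<alpha> (threshold_mech \<rho> rL rH) (\<lambda>_. truthful) v g k sh hs
       \<and> exp_total n \<alpha> (threshold_mech \<rho> rL rH) (\<lambda>_. truthful) v g k sh hs \<le> real k * hi"
proof (induction k arbitrary: sh hs)
  case 0 thus ?case by simp
next
  case (Suc k)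
  have wtnn: "\<And>P. P \<subseteq> {..<n} \<Longrightarrow> 0 \<le> wt n \<alpha> P" by (rule wt_nonneg) (auto simp: a01)
  define r where "r = threshold_mech \<rho> rL rH sh"
  have rr: "r = rL \<or> r = rH" by (simp add: r_def tm_trig)
  have "exp_total n \<alpha> (threshold_mech \<rho> rL rH) (\<lambda>_. truthful) v g (Suc k) sh hs
     \<le> (\<Sum>P\<in>Pow {..<n}. wt n \<alpha> P * (rew g P (\<lambda>j. (\<lambda>_. truthful) j (v j) (hs j) (threshold_mech \<rho> rL rH sh)) (threshold_mech \<rho> rL rH sh)
        + real k * hi))"
    by (rule step_le, erule wtnn, rule conjunct2[OF Suc.IH])
  also have "\<dots> = S n \<alpha> g v r + real k * hi"
    unfolding r_def[symmetric] by (simp only: bid_truth wsum_add2 S_def)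
  also have "\<dots> \<le> real (Suc k) * hi" using lohi[OF rr] by (simp add: algebra_simps)
  finally have up: "exp_total n \<alpha> (threshold_mech \<rho> rL rH) (\<lambda>_. truthful) v g (Suc k) sh hs \<le> real (Suc k) * hi" .
  have "real (Suc k) * lo \<le> S n \<alpha> g v r + real k * lo" using lohi[OF rr] by (simp add: algebra_simps)
  also have "\<dots> = (\<Sum>P\<in>Pow {..<n}. wt n \<alpha> P * (rew g P (\<lambda>j. (\<lambda>_. truthful) j (v j) (hs j) (threshold_mech \<rho> rL rH sh)) (threshold_mech \<rho> rL rH sh)
        + real k * lo))"
    unfolding r_def[symmetric] by (simp only: bid_truth wsum_add2 S_def)
  also have "\<dots> \<le> exp_total n \<alpha> (threshold_mech \<rho> rL rH) (\<lambda>_. truthful) v g (Suc k) sh hs"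
    by (rule step_ge, erule wtnn, rule conjunct1[OF Suc.IH])
  finally show ?case using up by blast
qed

lemma truth_low:
  assumes a01: "\<And>j. j < n \<Longrightarrow> 0 \<le> \<alpha> j \<and> \<alpha> j \<le> 1" and low: "\<forall>j<n. v j \<le> \<rho>"
  shows "\<not> trig \<rho> sh \<Longrightarrow> exp_total n \<alpha> (threshold_mech \<rho> rL rH) (\<lambda>_. truthful) v g k sh hs = real k * S n \<alpha> g v rL"
proof (induction k arbitrary: sh hs)
  case 0 thus ?case by simp
next
  case (Suc k)
  have wtnn: "\<And>P. P \<subseteq> {..<n} \<Longrightarrow> 0 \<le> wt n \<alpha> P" by (rule wt_nonneg) (auto simp: a01)
  have r: "threshold_mech \<rho> rL rH sh = rL" using Suc.prems by (simp add: tm_trig)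
  have nt: "\<And>P. P \<subseteq> {..<n} \<Longrightarrow> \<not> trig \<rho> (sh @ [\<lambda>j. if j \<in> P then Some ((\<lambda>_. truthful) j (v j) (hs j) (threshold_mech \<rho> rL rH sh)) else None])"
    using Suc.prems low by (auto simp: trig_snoc truthful_def split: if_splits)
  have IH: "\<And>P hs'. P \<subseteq> {..<n} \<Longrightarrow> exp_total n \<alpha> (threshold_mech \<rho> rL rH) (\<lambda>_. truthful) v g k
      (sh @ [\<lambda>j. if j \<in> P then Some ((\<lambda>_. truthful) j (v j) (hs j) (threshold_mech \<rho> rL rH sh)) else None]) hs' = real k * S n \<alpha> g v rL"
    using Suc.IH nt by blast
  have e: "(\<Sum>P\<in>Pow {..<n}. wt n \<alpha> P * (rew g P (\<lambda>j. (\<lambda>_. truthful) j (v j) (hs j) (threshold_mech \<rho> rL rH sh)) (threshold_mech \<rho> rL rH sh)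
        + real k * S n \<alpha> g v rL)) = real (Suc k) * S n \<alpha> g v rL"
    unfolding r by (simp only: bid_truth wsum_add2 S_def) (simp add: algebra_simps)
  have "exp_total n \<alpha> (threshold_mech \<rho> rL rH) (\<lambda>_. truthful) v g (Suc k) sh hs \<le> real (Suc k) * S n \<alpha> g v rL"
    unfolding e[symmetric] by (rule step_le, erule wtnn, rule eq_refl[OF IH], assumption)
  moreover have "real (Suc k) * S n \<alpha> g v rL \<le> exp_total n \<alpha> (threshold_mech \<rho> rL rH) (\<lambda>_. truthful) v g (Suc k) sh hs"
    unfolding e[symmetric] by (rule step_ge, erule wtnn, rule eq_refl[OF IH[symmetric]], assumption)
  ultimately show ?case by linarith
qed

lemma claimC:
  assumes a01: "\<And>j. j < n \<Longrightarrow> 0 \<le> \<alpha> j \<and> \<alpha> j \<le> 1" and r: "0 \<le> rL" "rL \<le> rH"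
  shows "real k * S n \<alpha> gr v rH - (if trig \<rho> sh then 0 else (rH - rL) * (\<Sum>t<k. pia n \<alpha> \<rho> v ^ t))
     \<le> exp_total n \<alpha> (threshold_mech \<rho> rL rH) (\<lambda>_. truthful) v gr k sh hs"
proof (induction k arbitrary: sh hs)
  case 0 thus ?case by simp
next
  case (Suc k)
  have wtnn: "\<And>P. P \<subseteq> {..<n} \<Longrightarrow> 0 \<le> wt n \<alpha> P" by (rule wt_nonneg) (auto simp: a01)
  define \<pi> where "\<pi> = pia n \<alpha> \<rho> v"
  define D where "D = (rH - rL) * (\<Sum>t<k. \<pi> ^ t)"
  define r where "r = threshold_mech \<rho> rL rH sh"
  have \<pi>0: "0 \<le> \<pi>" unfolding \<pi>_def pia_def using a01 by (intro prod_nonneg) auto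
  have D0: "0 \<le> D" unfolding D_def using r \<pi>0 by (intro mult_nonneg_nonneg sum_nonneg) auto
  have "real (Suc k) * S n \<alpha> gr v rH - (if trig \<rho> sh then 0 else (rH - rL) * (\<Sum>t<Suc k. \<pi> ^ t))
      \<le> S n \<alpha> gr v r + real k * S n \<alpha> gr v rH + - (if trig \<rho> sh then 0 else D * \<pi>)"
  proof (cases "trig \<rho> sh")
    case True thus ?thesis by (simp add: r_def tm_trig algebra_simps)
  next
    case False
    have "S n \<alpha> gr v rH - (rH - rL) \<le> S n \<alpha> gr v r"
      using S_gr_mono(1)[OF a01 r] False by (simp add: r_def tm_trig)
    thus ?thesis using False unfolding sum_pow_Suc by (simp add: D_def algebra_simps)
  qed
  also have "\<dots> = (\<Sum>P\<in>Pow {..<n}. wt n \<alpha> P * (rew gr P v r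
        + real k * S n \<alpha> gr v rH + - (if trig \<rho> sh then 0 else D * (if (\<forall>j\<in>P. \<not> (\<rho> < v j)) then 1 else 0))))"
  proof -
    have "(\<Sum>P\<in>Pow {..<n}. wt n \<alpha> P * - (if trig \<rho> sh then 0 else D * (if (\<forall>j\<in>P. \<not> (\<rho> < v j)) then 1 else 0)))
        = - (if trig \<rho> sh then 0 else D * (\<Sum>P\<in>Pow {..<n}. wt n \<alpha> P * (if (\<forall>j\<in>P. \<not> (\<rho> < v j)) then 1 else 0)))"
      by (simp add: sum_distrib_left sum_negf mult_ac)
    also have "\<dots> = - (if trig \<rho> sh then 0 else D * \<pi>)"
      by (simp only: wt_sum_avoid \<pi>_def pia_def)
    finally show ?thesis by (simp only: wsum_add3 S_def)
  qed
  also have "\<dots> \<le> (\<Sum>P\<in>Pow {..<n}. wt n \<alpha> P * (rew gr P v r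
        + (real k * S n \<alpha> gr v rH - (if trig \<rho> (sh @ [\<lambda>j. if j \<in> P then Some (v j) else None]) then 0 else D))))"
  proof (rule wsum_mono[OF a01])
    fix P :: "nat set" assume P: "P \<subseteq> {..<n}"
    have c: "- (if trig \<rho> sh then 0 else D * (if (\<forall>j\<in>P. \<not> (\<rho> < v j)) then 1 else 0))
       \<le> - (if trig \<rho> (sh @ [\<lambda>j. if j \<in> P then Some (v j) else None]) then 0 else D)"
    proof (cases "trig \<rho> sh")
      case True thus ?thesis by (simp add: trig_snoc)
    next
      case False
      show ?thesis
      proof (cases "trig \<rho> (sh @ [\<lambda>j. if j \<in> P then Some (v j) else None])")
        case True thus ?thesis using False D0 by simp
      next
        case nt: False
        hence "\<forall>j\<in>P. \<not> (\<rho> < v j)"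
          by (auto simp: trig_snoc split: if_splits)
        thus ?thesis using nt False by simp
      qed
    qed
    thus "rew gr P v r + real k * S n \<alpha> gr v rH + - (if trig \<rho> sh then 0 else D * (if (\<forall>j\<in>P. \<not> (\<rho> < v j)) then 1 else 0))
      \<le> rew gr P v r + (real k * S n \<alpha> gr v rH - (if trig \<rho> (sh @ [\<lambda>j. if j \<in> P then Some (v j) else None]) then 0 else D))"
      by linarith
  qed
  also have "\<dots> = (\<Sum>P\<in>Pow {..<n}. wt n \<alpha> P * (rew gr P (\<lambda>j. (\<lambda>_. truthful) j (v j) (hs j) (threshold_mech \<rho> rL rH sh)) (threshold_mech \<rho> rL rH sh)
        + (real k * S n \<alpha> gr v rH - (if trig \<rho> (sh @ [\<lambda>j. if j \<in> P then Some ((\<lambda>_. truthful) j (v j) (hs j) (threshold_mech \<rho> rL rH sh)) else None]) then 0 else D))))"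
    unfolding r_def[symmetric] by (simp only: bid_truth truthful_def)
  also have "\<dots> \<le> exp_total n \<alpha> (threshold_mech \<rho> rL rH) (\<lambda>_. truthful) v gr (Suc k) sh hs"
    by (rule step_ge[OF wtnn]) (simp_all only: Suc.IH D_def \<pi>_def)
  finally show ?case by (simp only: \<pi>_def)
qed

fun Et :: "nat \<Rightarrow> (nat \<Rightarrow> real) \<Rightarrow> real \<Rightarrow> real \<Rightarrow> real \<Rightarrow> (nat option \<Rightarrow> real \<Rightarrow> real) \<Rightarrow> nat \<Rightarrow> bool \<Rightarrow> (nat \<Rightarrow> real) \<Rightarrow> real" where
  "Et n \<alpha> \<rho> rL rH g 0 \<tau> v = 0"
| "Et n \<alpha> \<rho> rL rH g (Suc k) \<tau> v =
     (\<Sum>P\<in>Pow {..<n}. wt n \<alpha> P * (rew g P v (if \<tau> then rH else rL)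
        + (if (\<exists>j\<in>P. \<rho> < v j) then Et n \<alpha> \<rho> rL rH g k True v else Et n \<alpha> \<rho> rL rH g k \<tau> v)))"

lemma Et_eq:
  assumes a01: "\<And>j. j < n \<Longrightarrow> 0 \<le> \<alpha> j \<and> \<alpha> j \<le> 1"
  shows "exp_total n \<alpha> (threshold_mech \<rho> rL rH) (\<lambda>_. truthful) v g k sh hs = Et n \<alpha> \<rho> rL rH g k (trig \<rho> sh) v"
proof (induction k arbitrary: sh hs)
  case 0 thus ?case by simp
next
  case (Suc k)
  have wtnn: "\<And>P. P \<subseteq> {..<n} \<Longrightarrow> 0 \<le> wt n \<alpha> P" by (rule wt_nonneg) (auto simp: a01)
  have nx: "\<And>P. trig \<rho> (sh @ [\<lambda>j. if j \<in> P then Some ((\<lambda>_. truthful) j (v j) (hs j) (threshold_mech \<rho> rL rH sh)) else None])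
      = (trig \<rho> sh \<or> (\<exists>j\<in>P. \<rho> < v j))"
    by (auto simp: trig_snoc truthful_def split: if_splits)
  have IH: "\<And>P hs'. P \<subseteq> {..<n} \<Longrightarrow> exp_total n \<alpha> (threshold_mech \<rho> rL rH) (\<lambda>_. truthful) v g k
      (sh @ [\<lambda>j. if j \<in> P then Some ((\<lambda>_. truthful) j (v j) (hs j) (threshold_mech \<rho> rL rH sh)) else None]) hs'
      = (if (\<exists>j\<in>P. \<rho> < v j) then Et n \<alpha> \<rho> rL rH g k True v else Et n \<alpha> \<rho> rL rH g k (trig \<rho> sh) v)"
    unfolding Suc.IH nx by simp
  have e: "(\<Sum>P\<in>Pow {..<n}. wt n \<alpha> P * (rew g P (\<lambda>j. (\<lambda>_. truthful) j (v j) (hs j) (threshold_mech \<rho> rL rH sh)) (threshold_mech \<rho> rL rH sh)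
        + (if (\<exists>j\<in>P. \<rho> < v j) then Et n \<alpha> \<rho> rL rH g k True v else Et n \<alpha> \<rho> rL rH g k (trig \<rho> sh) v)))
     = Et n \<alpha> \<rho> rL rH g (Suc k) (trig \<rho> sh) v"
    by (simp add: bid_truth tm_trig)
  have "exp_total n \<alpha> (threshold_mech \<rho> rL rH) (\<lambda>_. truthful) v g (Suc k) sh hs \<le> Et n \<alpha> \<rho> rL rH g (Suc k) (trig \<rho> sh) v"
    unfolding e[symmetric] by (rule step_le, erule wtnn, rule eq_refl[OF IH], assumption)
  moreover have "Et n \<alpha> \<rho> rL rH g (Suc k) (trig \<rho> sh) v \<le> exp_total n \<alpha> (threshold_mech \<rho> rL rH) (\<lambda>_. truthful) v g (Suc k) sh hs"
    unfolding e[symmetric] by (rule step_ge, erule wtnn, rule eq_refl[OF IH[symmetric]], assumption)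
  ultimately show ?case by linarith
qed

lemma rew_alt:
  assumes "finite P"
  shows "rew g P b r = (if P = {} then g None 0 else if r \<le> Max (b ` P) then
     (\<Sum>w\<in>P. if b w = Max (b ` P) then g (Some w) (price P b r w) else 0) /
     (\<Sum>w\<in>P. if b w = Max (b ` P) then 1 else 0) else g None 0)"
proof -
  have W: "winners P b = {w\<in>P. b w = Max (b ` P)}" by (simp add: winners_def)
  have 1: "(\<Sum>w\<in>winners P b. (1 / real (card (winners P b))) * g (Some w) (price P b r w))
      = (\<Sum>w\<in>winners P b. g (Some w) (price P b r w)) / real (card (winners P b))"
    by (simp add: sum_divide_distrib[symmetric])
  have 2: "(\<Sum>w\<in>winners P b. g (Some w) (price P b r w)) = (\<Sum>w\<in>P. if b w = Max (b ` P) then g (Some w) (price P b r w) else 0)"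
    unfolding W using assms by (simp add: sum.inter_filter)
  have 3: "real (card (winners P b)) = (\<Sum>w\<in>P. if b w = Max (b ` P) then 1 else 0)"
    unfolding W using assms by (simp add: sum.inter_filter[symmetric])
  show ?thesis unfolding rew_def sale_def 1 unfolding 2 3 by simp
qed

lemma rew_meas:
  fixes \<phi> :: "'a \<Rightarrow> nat \<Rightarrow> real"
  assumes P: "P \<subseteq> {..<n}" and \<phi>: "\<And>j. j < n \<Longrightarrow> (\<lambda>w. \<phi> w j) \<in> borel_measurable Mx"
    and g: "\<And>j. g (Some j) \<in> borel_measurable borel"
  shows "(\<lambda>w. rew g P (\<phi> w) r) \<in> borel_measurable Mx"
proof -
  have fin: "finite P" using P by (meson finite_lessThan finite_subset)
  have [measurable]: "\<And>j. j \<in> P \<Longrightarrow> (\<lambda>w. \<phi> w j) \<in> borel_measurable Mx" using \<phi> P by auto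
  have [measurable]: "\<And>j. g (Some j) \<in> borel_measurable borel" by (rule g)
  have mx[measurable]: "(\<lambda>w. Max ((\<lambda>j. \<phi> w j) ` P)) \<in> borel_measurable Mx"
    using fin by (intro borel_measurable_Max) auto
  have mx2[measurable]: "\<And>k. (\<lambda>w. Max ((\<lambda>j. \<phi> w j) ` (P - {k}))) \<in> borel_measurable Mx"
    using fin by (intro borel_measurable_Max) auto
  have pr[measurable]: "\<And>k. (\<lambda>w. price P (\<phi> w) r k) \<in> borel_measurable Mx"
    unfolding price_def by measurable
  have "(\<lambda>w. (if P = {} then g None 0 else if r \<le> Max ((\<lambda>j. \<phi> w j) ` P) then
     (\<Sum>k\<in>P. if \<phi> w k = Max ((\<lambda>j. \<phi> w j) ` P) then g (Some k) (price P (\<phi> w) r k) else 0) /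
     (\<Sum>k\<in>P. if \<phi> w k = Max ((\<lambda>j. \<phi> w j) ` P) then 1 else 0) else g None 0)) \<in> borel_measurable Mx"
    by measurable
  thus ?thesis by (simp add: rew_alt[OF fin])
qed

lemma Et_meas:
  fixes \<phi> :: "'a \<Rightarrow> nat \<Rightarrow> real"
  assumes \<phi>: "\<And>j. j < n \<Longrightarrow> (\<lambda>w. \<phi> w j) \<in> borel_measurable Mx"
    and g: "\<And>j. g (Some j) \<in> borel_measurable borel"
  shows "(\<lambda>w. Et n \<alpha> \<rho> rL rH g k \<tau> (\<phi> w)) \<in> borel_measurable Mx"
proof (induction k arbitrary: \<tau>)
  case 0 thus ?case by simp
next
  case (Suc k)
  show ?case unfolding Et.simps
  proof (rule borel_measurable_sum)
    fix P assume "P \<in> Pow {..<n}"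
    hence P: "P \<subseteq> {..<n}" by auto
    have fin: "finite P" using P by (meson finite_lessThan finite_subset)
    have [measurable]: "(\<lambda>w. rew g P (\<phi> w) (if \<tau> then rH else rL)) \<in> borel_measurable Mx"
      by (rule rew_meas[where \<phi>=\<phi> and g=g, OF P \<phi> g])
    have [measurable]: "(\<lambda>w. Et n \<alpha> \<rho> rL rH g k True (\<phi> w)) \<in> borel_measurable Mx"
      "(\<lambda>w. Et n \<alpha> \<rho> rL rH g k \<tau> (\<phi> w)) \<in> borel_measurable Mx" using Suc.IH by auto
    have [measurable]: "\<And>j. j \<in> P \<Longrightarrow> (\<lambda>w. \<phi> w j) \<in> borel_measurable Mx" using \<phi> P by auto
    have [measurable]: "Measurable.pred Mx (\<lambda>w. \<exists>j\<in>P. \<rho> < \<phi> w j)"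
      using fin by measurable
    show "(\<lambda>w. wt n \<alpha> P * (rew g P (\<phi> w) (if \<tau> then rH else rL) +
        (if \<exists>j\<in>P. \<rho> < \<phi> w j then Et n \<alpha> \<rho> rL rH g k True (\<phi> w) else Et n \<alpha> \<rho> rL rH g k \<tau> (\<phi> w))))
        \<in> borel_measurable Mx" by measurable
  qed
qed

lemma S_meas:
  fixes \<phi> :: "'a \<Rightarrow> nat \<Rightarrow> real"
  assumes \<phi>: "\<And>j. j < n \<Longrightarrow> (\<lambda>w. \<phi> w j) \<in> borel_measurable Mx"
    and g: "\<And>j. g (Some j) \<in> borel_measurable borel"
  shows "(\<lambda>w. S n \<alpha> g (\<phi> w) r) \<in> borel_measurable Mx"
  unfolding S_def
  by (rule borel_measurable_sum, rule borel_measurable_times, simp, rule rew_meas[where \<phi>=\<phi> and g=g, OF _ \<phi> g]) auto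

lemma pia_meas:
  fixes \<phi> :: "'a \<Rightarrow> nat \<Rightarrow> real"
  assumes \<phi>: "\<And>j. j < n \<Longrightarrow> (\<lambda>w. \<phi> w j) \<in> borel_measurable Mx"
  shows "(\<lambda>w. pia n \<alpha> \<rho> (\<phi> w) ^ t) \<in> borel_measurable Mx"
    "(\<lambda>w. pio n \<alpha> \<rho> i (\<phi> w) ^ t) \<in> borel_measurable Mx"
proof -
  have [measurable]: "\<And>j. j \<in> {..<n} \<Longrightarrow> (\<lambda>w. \<phi> w j) \<in> borel_measurable Mx" using \<phi> by auto
  have "(\<lambda>w. pia n \<alpha> \<rho> (\<phi> w)) \<in> borel_measurable Mx" unfolding pia_def
    by (rule borel_measurable_prod) measurable
  thus "(\<lambda>w. pia n \<alpha> \<rho> (\<phi> w) ^ t) \<in> borel_measurable Mx" by measurable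
  have "(\<lambda>w. pio n \<alpha> \<rho> i (\<phi> w)) \<in> borel_measurable Mx" unfolding pio_def
    by (rule borel_measurable_prod) measurable
  thus "(\<lambda>w. pio n \<alpha> \<rho> i (\<phi> w) ^ t) \<in> borel_measurable Mx" by measurable
qed

lemma AE_msupport:
  assumes "prob_space Mu" "sets Mu = sets borel"
  shows "AE x in Mu. x \<in> msupport Mu"
proof -
  interpret prob_space Mu by fact
  let ?F = "{ball x e | x e. 0 < e \<and> measure Mu (ball x e) = 0}"
  obtain F' where F': "F' \<subseteq> ?F" "countable F'" "\<Union>F' = \<Union>?F"
    using Lindelof[of ?F] by auto
  have "(\<Union>B\<in>F'. id B) \<in> null_sets Mu"
  proof (rule null_sets_UN'[OF F'(2)])
    fix B assume "B \<in> F'"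
    then obtain x e where B: "B = ball x e" "measure Mu (ball x e) = 0" using F'(1) by auto
    have Bs: "B \<in> sets Mu" using B assms(2) by simp
    have "emeasure Mu B = 0" using B Bs by (simp add: emeasure_eq_measure)
    thus "id B \<in> null_sets Mu" using Bs by (simp add: null_setsI)
  qed
  hence null: "\<Union>F' \<in> null_sets Mu" by simp
  show ?thesis
  proof (rule AE_I'[OF null])
    show "{x \<in> space Mu. \<not> x \<in> msupport Mu} \<subseteq> \<Union>F'"
    proof
      fix x assume "x \<in> {x \<in> space Mu. \<not> x \<in> msupport Mu}"
      then obtain e where e: "0 < e" "\<not> measure Mu (ball x e) > 0" by (auto simp: msupport_def)
      hence "measure Mu (ball x e) = 0" using measure_nonneg[of Mu "ball x e"] by linarith
      hence "ball x e \<in> ?F" using e by auto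
      moreover have "x \<in> ball x e" using e by simp
      ultimately show "x \<in> \<Union>F'" using F'(3) by blast
    qed
  qed
qed

lemma integral_prod_PiM:
  fixes Mu :: "real measure" and h :: "nat \<Rightarrow> real \<Rightarrow> real"
  assumes "prob_space Mu" "finite I" "\<And>j. j \<in> I \<Longrightarrow> integrable Mu (h j)"
  shows "(\<integral>w. (\<Prod>j\<in>I. h j (w j)) \<partial>PiM I (\<lambda>_. Mu)) = (\<Prod>j\<in>I. integral\<^sup>L Mu (h j))"
proof -
  have psf: "product_sigma_finite (\<lambda>_. Mu)" unfolding product_sigma_finite_def
    using prob_space_imp_sigma_finite[OF assms(1)] by simp
  show ?thesis using product_sigma_finite.product_integral_prod[OF psf assms(2), of h] assms(3) by simp
qed

lemma int_step:
  fixes Mu :: "real measure"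
  assumes "prob_space Mu" "sets Mu = sets borel"
  shows "(\<integral>z. (if \<rho> < z then c else 1) \<partial>Mu) = 1 - (1 - c) * (1 - measure Mu {..\<rho>})"
proof -
  interpret prob_space Mu by fact
  have sp: "space Mu = UNIV" using sets_eq_imp_space_eq[OF assms(2)] by simp
  have A: "{\<rho><..} \<in> sets Mu" "{..\<rho>} \<in> sets Mu" using assms(2) by auto
  have e1: "{\<rho><..} = space Mu - {..\<rho>}" unfolding sp by auto
  have m: "measure Mu {\<rho><..} = 1 - measure Mu {..\<rho>}"
    unfolding e1 by (rule prob_compl[OF A(2)])
  have eq: "(\<lambda>z. if \<rho> < z then c else 1) = (\<lambda>z. 1 - (1 - c) * indicator {\<rho><..} z)"
    by (rule ext) (simp add: indicator_def)
  have i1: "integrable Mu (\<lambda>z. 1::real)" by (rule integrable_const)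
  have i2: "integrable Mu (\<lambda>z. (1 - c) * indicator {\<rho><..} z :: real)"
    by (rule integrable_mult_right, rule integrable_real_indicator[OF A(1)]) (simp add: emeasure_eq_measure)
  have "(\<integral>z. 1 - (1 - c) * indicator {\<rho><..} z \<partial>Mu) = (\<integral>z. 1 \<partial>Mu) - (\<integral>z. (1 - c) * indicator {\<rho><..} z \<partial>Mu)"
    by (rule Bochner_Integration.integral_diff[OF i1 i2])
  also have "(\<integral>z. 1 \<partial>Mu) = (1::real)" using prob_space by simp
  also have "(\<integral>z. (1 - c) * indicator {\<rho><..} z \<partial>Mu) = (1 - c) * measure Mu {\<rho><..}"
    using sp by simp
  finally show ?thesis unfolding eq m .
qed

lemma sets_valdist[simp]: "sets (valdist f s) = sets borel"
  by (simp add: valdist_def)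

lemma comp_meas_upd:
  fixes Mu :: "real measure"
  assumes "sets Mu = sets borel" "j < n"
  shows "(\<lambda>w. (w(i := vi)) j) \<in> borel_measurable (PiM ({..<n} - {i}) (\<lambda>_. Mu))"
proof (cases "j = i")
  case True thus ?thesis by simp
next
  case False
  have "(\<lambda>w. w j) \<in> measurable (PiM ({..<n} - {i}) (\<lambda>_. Mu)) Mu"
    using False assms(2) by (intro measurable_component_singleton) auto
  hence "(\<lambda>w. w j) \<in> borel_measurable (PiM ({..<n} - {i}) (\<lambda>_. Mu))"
    using measurable_cong_sets[OF refl assms(1)] by blast
  thus ?thesis using False by simp
qed

lemma comp_meas:
  fixes Mu :: "real measure"
  assumes "sets Mu = sets borel" "j < n"
  shows "(\<lambda>w. w j) \<in> borel_measurable (PiM {..<n} (\<lambda>_. Mu))"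
proof -
  have "(\<lambda>w. w j) \<in> measurable (PiM {..<n} (\<lambda>_. Mu)) Mu"
    using assms(2) by (intro measurable_component_singleton) auto
  thus ?thesis using measurable_cong_sets[OF refl assms(1)] by blast
qed

lemma gi_meas: "gi vi i (Some j) \<in> borel_measurable borel"
  by (cases "j = i") (simp_all add: gi_def)

lemma gr_meas: "gr (Some j) \<in> borel_measurable borel"
  by (simp add: gr_def)

lemma S_gi_bounds:
  assumes a01: "\<And>j. j < n \<Longrightarrow> 0 \<le> \<alpha> j \<and> \<alpha> j \<le> 1" and vi: "v i = vi" and r: "0 \<le> r"
  shows "0 \<le> S n \<alpha> (gi vi i) v r \<and> S n \<alpha> (gi vi i) v r \<le> \<bar>vi\<bar>"
proof -
  have rw: "\<And>P. P \<subseteq> {..<n} \<Longrightarrow> 0 \<le> rew (gi vi i) P v r \<and> rew (gi vi i) P v r \<le> \<bar>vi\<bar>"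
  proof -
    fix P :: "nat set" assume P: "P \<subseteq> {..<n}"
    hence fin: "finite P" by (meson finite_lessThan finite_subset)
    have "0 \<le> price P v r i" using price_ge[of r P v i] r by linarith
    thus "0 \<le> rew (gi vi i) P v r \<and> rew (gi vi i) P v r \<le> \<bar>vi\<bar>"
      using rew_gi_truth[OF fin, of v i vi r] vi by auto
  qed
  have "0 \<le> S n \<alpha> (gi vi i) v r" unfolding S_def
    using rw wt_nonneg[OF a01] by (intro sum_nonneg mult_nonneg_nonneg) auto
  moreover have "S n \<alpha> (gi vi i) v r \<le> (\<Sum>P\<in>Pow {..<n}. wt n \<alpha> P * \<bar>vi\<bar>)" unfolding S_def
    by (rule wsum_mono[OF a01]) (use rw in auto)
  ultimately show ?thesis by (simp add: wsum_const)
qed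

lemma pio_bounds:
  assumes a01: "\<And>j. j < n \<Longrightarrow> 0 \<le> \<alpha> j \<and> \<alpha> j \<le> 1"
  shows "0 \<le> pio n \<alpha> \<rho> i v ^ t \<and> pio n \<alpha> \<rho> i v ^ t \<le> 1" "0 \<le> pia n \<alpha> \<rho> v ^ t \<and> pia n \<alpha> \<rho> v ^ t \<le> 1"
proof -
  have "0 \<le> pio n \<alpha> \<rho> i v \<and> pio n \<alpha> \<rho> i v \<le> 1" unfolding pio_def using a01
    by (auto intro!: prod_nonneg prod_le_1)
  thus "0 \<le> pio n \<alpha> \<rho> i v ^ t \<and> pio n \<alpha> \<rho> i v ^ t \<le> 1" by (simp add: power_le_one)
  have "0 \<le> pia n \<alpha> \<rho> v \<and> pia n \<alpha> \<rho> v \<le> 1" unfolding pia_def using a01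
    by (auto intro!: prod_nonneg prod_le_1)
  thus "0 \<le> pia n \<alpha> \<rho> v ^ t \<and> pia n \<alpha> \<rho> v ^ t \<le> 1" by (simp add: power_le_one)
qed

lemma if_pow: "(if c then a else 1) ^ t = (if c then a ^ t else (1::real))" by simp

lemma pio_upd:
  assumes "i < n"
  shows "pio n \<alpha> \<rho> i (w(i := vi)) ^ t = (\<Prod>j\<in>{..<n} - {i}. if \<rho> < w j then (1 - \<alpha> j) ^ t else 1)"
proof -
  have "pio n \<alpha> \<rho> i (w(i := vi)) = (\<Prod>j\<in>{..<n} - {i}. if j \<noteq> i \<and> \<rho> < (w(i := vi)) j then 1 - \<alpha> j else 1)"
    unfolding pio_def using assms by (subst prod.remove[of _ i]) auto
  also have "\<dots> = (\<Prod>j\<in>{..<n} - {i}. if \<rho> < w j then 1 - \<alpha> j else 1)" by (intro prod.cong) auto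
  finally show ?thesis by (simp add: prod_power_distrib if_pow)
qed

lemma pia_pow: "pia n \<alpha> \<rho> v ^ t = (\<Prod>j\<in>{..<n}. if \<rho> < v j then (1 - \<alpha> j) ^ t else 1)"
  unfolding pia_def by (simp add: prod_power_distrib if_pow)

lemma int_step_integrable:
  fixes Mu :: "real measure" and c :: real
  assumes "prob_space Mu" "sets Mu = sets borel"
  shows "integrable Mu (\<lambda>z. if \<rho> < z then c else 1)"
proof -
  interpret prob_space Mu by fact
  have A: "{\<rho><..} \<in> sets Mu" using assms(2) by auto
  have eq: "(\<lambda>z. if \<rho> < z then c else 1) = (\<lambda>z. 1 - (1 - c) * indicator {\<rho><..} z)"
    by (rule ext) (simp add: indicator_def)
  have i1: "integrable Mu (\<lambda>z. 1::real)" by (rule integrable_const)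
  have i2: "integrable Mu (\<lambda>z. (1 - c) * indicator {\<rho><..} z :: real)"
    by (rule integrable_mult_right, rule integrable_real_indicator[OF A]) (simp add: emeasure_eq_measure)
  show ?thesis unfolding eq by (rule Bochner_Integration.integrable_diff[OF i1 i2])
qed

lemma int_prod_if:
  fixes Mu :: "real measure" and J :: "nat set" and c :: "nat \<Rightarrow> real"
  assumes "prob_space Mu" "sets Mu = sets borel" "finite J"
  shows "(\<integral>w. (\<Prod>j\<in>J. if \<rho> < w j then (c j) else 1) \<partial>PiM J (\<lambda>_. Mu))
     = (\<Prod>j\<in>J. 1 - (1 - c j) * (1 - measure Mu {..\<rho>}))"
proof -
  have "(\<integral>w. (\<Prod>j\<in>J. if \<rho> < w j then (c j) else 1) \<partial>PiM J (\<lambda>_. Mu))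
     = (\<Prod>j\<in>J. \<integral>z. (if \<rho> < z then c j else 1) \<partial>Mu)"
    using integral_prod_PiM[OF assms(1,3), of "\<lambda>j z. if \<rho> < z then c j else 1"]
      int_step_integrable[OF assms(1,2)] by simp
  also have "\<dots> = (\<Prod>j\<in>J. 1 - (1 - c j) * (1 - measure Mu {..\<rho>}))"
    using int_step[OF assms(1,2)] by simp
  finally show ?thesis .
qed

lemma integrable_bdd:
  assumes "prob_space M" "f \<in> borel_measurable M" "\<And>x. x \<in> space M \<Longrightarrow> \<bar>f x\<bar> \<le> (B::real)"
  shows "integrable M f"
proof -
  interpret prob_space M by fact
  show ?thesis by (rule integrable_const_bound[where B=B]) (use assms in auto)
qed

lemma exp_total_one:
  assumes a01: "\<And>j. j < n \<Longrightarrow> 0 \<le> \<alpha> j \<and> \<alpha> j \<le> 1"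
  shows "exp_total n \<alpha> M (\<lambda>_. truthful) v g (Suc 0) sh hs = S n \<alpha> g v (M sh)"
proof -
  have wtnn: "\<And>P. P \<subseteq> {..<n} \<Longrightarrow> 0 \<le> wt n \<alpha> P" by (rule wt_nonneg) (auto simp: a01)
  have e: "(\<Sum>P\<in>Pow {..<n}. wt n \<alpha> P * (rew g P (\<lambda>j. (\<lambda>_. truthful) j (v j) (hs j) (M sh)) (M sh) + 0)) = S n \<alpha> g v (M sh)"
    by (simp add: bid_truth S_def)
  have "exp_total n \<alpha> M (\<lambda>_. truthful) v g (Suc 0) sh hs \<le> S n \<alpha> g v (M sh)"
    unfolding e[symmetric] by (rule step_le, erule wtnn) simp
  moreover have "S n \<alpha> g v (M sh) \<le> exp_total n \<alpha> M (\<lambda>_. truthful) v g (Suc 0) sh hs"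
    unfolding e[symmetric] by (rule step_ge, erule wtnn) simp
  ultimately show ?thesis by simp
qed


lemma Ut_bounds:
  assumes a01: "\<And>j. j < n \<Longrightarrow> 0 \<le> \<alpha> j \<and> \<alpha> j \<le> 1" and r: "0 \<le> rL" "rL \<le> rH"
  shows "0 \<le> exp_total n \<alpha> (threshold_mech \<rho> rL rH) (\<lambda>_. truthful) (w(i := vi)) (gi vi i) k sh hs
    \<and> exp_total n \<alpha> (threshold_mech \<rho> rL rH) (\<lambda>_. truthful) (w(i := vi)) (gi vi i) k sh hs \<le> real k * \<bar>vi\<bar>"
proof -
  have sb: "\<And>r. r = rL \<or> r = rH \<Longrightarrow> 0 \<le> S n \<alpha> (gi vi i) (w(i := vi)) r \<and> S n \<alpha> (gi vi i) (w(i := vi)) r \<le> \<bar>vi\<bar>"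
  proof -
    fix r assume "r = rL \<or> r = rH"
    hence r0: "0 \<le> r" using r by auto
    have vv: "(w(i := vi)) i = vi" by simp
    show "0 \<le> S n \<alpha> (gi vi i) (w(i := vi)) r \<and> S n \<alpha> (gi vi i) (w(i := vi)) r \<le> \<bar>vi\<bar>"
      using S_gi_bounds[where n=n and \<alpha>=\<alpha> and v="w(i := vi)" and i=i and vi=vi and r=r] a01 vv r0 by blast
  qed
  show ?thesis using truth_bounds[of n \<alpha> rL rH 0 "gi vi i" "w(i := vi)" "\<bar>vi\<bar>" k \<rho> sh hs, OF a01 sb] by simp
qed

lemma Ut_lower:
  assumes a01: "\<And>j. j < n \<Longrightarrow> 0 \<le> \<alpha> j \<and> \<alpha> j \<le> 1" and i: "i < n" and r: "rL \<le> rH"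
  shows "real k * S n \<alpha> (gi vi i) (w(i := vi)) rH \<le> exp_total n \<alpha> (threshold_mech \<rho> rL rH) (\<lambda>_. truthful) (w(i := vi)) (gi vi i) k sh hs"
proof -
  have sb: "\<And>r. r = rL \<or> r = rH \<Longrightarrow> S n \<alpha> (gi vi i) (w(i := vi)) rH \<le> S n \<alpha> (gi vi i) (w(i := vi)) r \<and> S n \<alpha> (gi vi i) (w(i := vi)) r \<le> S n \<alpha> (gi vi i) (w(i := vi)) rL"
    using S_gi_mono(1)[of n \<alpha> "w(i := vi)" i vi rL rH, OF a01 fun_upd_same i r] by auto
  show ?thesis using truth_bounds[of n \<alpha> rL rH "S n \<alpha> (gi vi i) (w(i := vi)) rH" "gi vi i" "w(i := vi)" "S n \<alpha> (gi vi i) (w(i := vi)) rL" k \<rho> sh hs, OF a01 sb] by simp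
qed

lemma Rv_bounds:
  assumes a01: "\<And>j. j < n \<Longrightarrow> 0 \<le> \<alpha> j \<and> \<alpha> j \<le> 1" and r: "0 \<le> rL" "rL \<le> rH"
  shows "0 \<le> exp_total n \<alpha> (threshold_mech \<rho> rL rH) (\<lambda>_. truthful) v gr k sh hs
    \<and> exp_total n \<alpha> (threshold_mech \<rho> rL rH) (\<lambda>_. truthful) v gr k sh hs \<le> real k * (S n \<alpha> gr v rH + rH)"
proof -
  note sm = S_gr_mono[of n \<alpha> rL rH v, OF a01 r]
  have sb: "\<And>r. r = rL \<or> r = rH \<Longrightarrow> 0 \<le> S n \<alpha> gr v r \<and> S n \<alpha> gr v r \<le> S n \<alpha> gr v rH + rH"
    using sm r by auto
  show ?thesis using truth_bounds[of n \<alpha> rL rH 0 gr v "S n \<alpha> gr v rH + rH" k \<rho> sh hs, OF a01 sb] by simp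
qed

theorem theorem2:
  fixes n T :: nat and \<alpha> :: "nat \<Rightarrow> real" and f :: "itype \<Rightarrow> real \<Rightarrow> real"
    and Lbar \<epsilon> \<rho> rL rH \<alpha>min n0 T0 :: real
  assumes "1 \<le> n" and "1 < T"
    and dens: "\<And>s. f s \<in> borel_measurable borel"
    and dens_nonneg: "\<And>s x. 0 \<le> f s x"
    and dens_prob: "\<And>s. prob_space (valdist f s)"
    and part: "\<And>i. i < n \<Longrightarrow> 0 < \<alpha> i \<and> \<alpha> i \<le> 1"
    and regL: "regular f L" and regH: "regular f H"
    and suppL: "msupport (valdist f L) \<subseteq> {0..Lbar}"
    and rL: "rL \<in> msupport (valdist f L)" "virtual_value f L rL = 0"
            "\<And>r. r \<in> msupport (valdist f L) \<Longrightarrow> virtual_value f L r = 0 \<Longrightarrow> r = rL"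
    and rH: "rH \<in> msupport (valdist f H)" "virtual_value f H rH = 0"
            "\<And>r. r \<in> msupport (valdist f H) \<Longrightarrow> virtual_value f H r = 0 \<Longrightarrow> r = rH"
    and eps: "0 < \<epsilon>" "\<epsilon> < rH - rL"
    and alpha_min: "\<alpha>min = Min (\<alpha> ` {..<n})"
    and rho: "Lbar \<le> \<rho>" "0 < 1 - cdf f H \<rho>"
    and n0_def: "n0 = 1 + 1.59 * ln (2 * (rH - rL) / \<epsilon>) / (1 - cdf f H \<rho>)"
    and T0_def: "T0 = 2 * (rH - rL) / \<epsilon> * of_int \<lceil>(n0 - 1) / ((real n - 1) * \<alpha>min)\<rceil>"
    and "n0 \<le> real n" and "T0 \<le> real T"
  shows "eps_IC n \<alpha> (threshold_mech \<rho> rL rH) T f \<epsilon>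
       \<and> (\<forall>s. (revenue n \<alpha> (\<lambda>_. if s = L then rL else rH) 1 f s - \<epsilon>) * real T
               \<le> revenue n \<alpha> (threshold_mech \<rho> rL rH) T f s)"
proof -
  have a01: "\<And>j. j < n \<Longrightarrow> 0 \<le> \<alpha> j \<and> \<alpha> j \<le> 1" using part by fastforce
  have ps: "\<And>s. prob_space (valdist f s)" by (rule dens_prob)
  have cdf01: "\<And>s y. 0 \<le> cdf f s y \<and> cdf f s y \<le> 1"
    unfolding cdf_def using prob_space.prob_le_1[OF ps] measure_nonneg by auto
  have rL0: "0 \<le> rL"
  proof -
    have "rL = (1 - cdf f L rL) / f L rL" using rL(2) by (simp add: virtual_value_def)
    moreover have "0 \<le> (1 - cdf f L rL) / f L rL"
      using cdf01[of L rL] dens_nonneg[of L rL] by (intro divide_nonneg_nonneg) auto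
    ultimately show ?thesis by simp
  qed
  have rLH: "rL \<le> rH" using eps by simp
  define \<Delta> where "\<Delta> = rH - rL"
  define x where "x = 2 * (rH - rL) / \<epsilon>"
  have x2: "2 < x" using eps by (simp add: x_def pos_less_divide_eq)
  define p where "p = 1 - cdf f H \<rho>"
  have p: "0 < p" "p \<le> 1" using rho(2) cdf01[of H \<rho>] by (auto simp: p_def)
  have lnx: "0 < ln x" using x2 by simp
  have n0x: "n0 = 1 + 1.59 * ln x / p" by (simp add: n0_def x_def p_def)
  have n0gt: "1 < n0" using lnx p by (simp add: n0x)
  have n2: "2 \<le> n" using n0gt \<open>n0 \<le> real n\<close> by linarith
  have z0: "0 \<in> {..<n}" using n2 by simp
  have fin_ne: "finite (\<alpha> ` {..<n})" "\<alpha> ` {..<n} \<noteq> {}" using z0 by blast+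
  have am_le: "\<And>j. j < n \<Longrightarrow> \<alpha>min \<le> \<alpha> j" unfolding alpha_min using fin_ne by (intro Min_le) auto
  have "\<alpha>min \<in> \<alpha> ` {..<n}" unfolding alpha_min using fin_ne by (rule Min_in)
  then obtain j0 where j0: "j0 < n" "\<alpha>min = \<alpha> j0" by auto
  have am: "0 < \<alpha>min" "\<alpha>min \<le> 1" using part[OF j0(1)] j0 by auto
  define m where "m = real n - 1"
  have mge: "1.59 * ln x / p \<le> m" using \<open>n0 \<le> real n\<close> by (simp add: n0x m_def)
  have mpos: "0 < m" using n2 by (simp add: m_def)
  define y where "y = (n0 - 1) / ((real n - 1) * \<alpha>min)"
  have ypos: "0 < y" using n0gt n2 am by (simp add: y_def)
  define C where "C = nat \<lceil>y\<rceil>"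
  have Cy: "real C = of_int \<lceil>y\<rceil>" using ypos by (simp add: C_def)
  have yC: "y \<le> real C" using Cy by simp
  have C_ge: "(1.59 * ln x / p) / (m * \<alpha>min) \<le> real C" using yC by (simp add: y_def n0x m_def)
  have TC: "x * real C \<le> real T" using \<open>T0 \<le> real T\<close> by (simp add: T0_def Cy x_def y_def)
  have numJ: "\<And>J. finite J \<Longrightarrow> m \<le> real (card J) \<Longrightarrow> J \<subseteq> {..<n} \<Longrightarrow>
      (\<Sum>t<T. \<Prod>j\<in>J. 1 - (1 - (1 - \<alpha> j) ^ t) * p) \<le> 2 * real T / x"
  proof -
    fix J :: "nat set" assume J: "finite J" "m \<le> real (card J)" "J \<subseteq> {..<n}"
    show "(\<Sum>t<T. \<Prod>j\<in>J. 1 - (1 - (1 - \<alpha> j) ^ t) * p) \<le> 2 * real T / x"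
      by (rule numeric[OF x2 p am mge C_ge J(1,2) _ TC]) (use J(3) am_le a01 in auto)
  qed
  have DT: "\<Delta> * (2 * real T / x) = \<epsilon> * real T" using eps by (simp add: x_def \<Delta>_def field_simps)
  have Dpos: "0 \<le> \<Delta>" using eps by (simp add: \<Delta>_def)
  have cdfH: "measure (valdist f H) {..\<rho>} = 1 - p" by (simp add: p_def cdf_def)
  have gi_eq: "\<And>vi i. (\<lambda>ow p. case ow of None \<Rightarrow> 0 | Some j \<Rightarrow> if j = i then vi - p else 0) = gi vi i"
    by (simp add: gi_def)
  have gr_eq: "(\<lambda>ow p. case ow of None \<Rightarrow> (0::real) | Some _ \<Rightarrow> p) = gr" by (simp add: gr_def)
  have upd: "\<And>i. ((\<lambda>_::nat. truthful)(i := truthful)) = (\<lambda>_. truthful)" by (rule ext) simp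
  have AEsupp: "\<And>s (J::nat set). finite J \<Longrightarrow> (\<And>z. z \<in> msupport (valdist f s) \<Longrightarrow> z \<le> \<rho>) \<Longrightarrow>
      AE w in PiM J (\<lambda>_. valdist f s). \<forall>j\<in>J. w j \<le> \<rho>"
  proof -
    fix s :: itype and J :: "nat set" assume J: "finite J" and S: "\<And>z. z \<in> msupport (valdist f s) \<Longrightarrow> z \<le> \<rho>"
    have ae: "AE z in valdist f s. z \<le> \<rho>"
      using AE_msupport[OF ps sets_valdist] by eventually_elim (rule S)
    show "AE w in PiM J (\<lambda>_. valdist f s). \<forall>j\<in>J. w j \<le> \<rho>"
      by (rule AE_finite_allI[OF J]) (rule AE_PiM_component[where M="\<lambda>_. valdist f s" and P="\<lambda>z. z \<le> \<rho>"], rule ps, assumption, rule ae)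
  qed
  have suppLrho: "\<And>z. z \<in> msupport (valdist f L) \<Longrightarrow> z \<le> \<rho>" using suppL rho(1) by fastforce

  have IC: "eps_IC n \<alpha> (threshold_mech \<rho> rL rH) T f \<epsilon>"
    unfolding eps_IC_def eps_best_response_def
  proof (intro allI impI ballI)
    fix i s vi B' assume i: "i < n" and vi: "vi \<in> msupport (valdist f s)"
    define I where "I = {..<n} - {i}"
    define Pm where "Pm = PiM I (\<lambda>_. valdist f s)"
    define Ud where "Ud = (\<lambda>w. exp_total n \<alpha> (threshold_mech \<rho> rL rH) ((\<lambda>_. truthful)(i := B')) (w(i := vi)) (gi vi i) T [] (\<lambda>_. []))"
    define Ut where "Ut = (\<lambda>w. exp_total n \<alpha> (threshold_mech \<rho> rL rH) (\<lambda>_. truthful) (w(i := vi)) (gi vi i) T [] (\<lambda>_. []))"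
    have uD: "utility n \<alpha> (threshold_mech \<rho> rL rH) T f i vi s B' (\<lambda>_. truthful) = integral\<^sup>L Pm Ud"
      unfolding utility_def gi_eq by (simp add: Ud_def Pm_def I_def)
    have uT: "utility n \<alpha> (threshold_mech \<rho> rL rH) T f i vi s truthful (\<lambda>_. truthful) = integral\<^sup>L Pm Ut"
      unfolding utility_def gi_eq upd by (simp add: Ut_def Pm_def I_def)
    have finI: "finite I" by (simp add: I_def)
    have psP: "prob_space Pm" unfolding Pm_def by (rule prob_space_PiM) (rule ps)
    have comp: "\<And>j. j < n \<Longrightarrow> (\<lambda>w. (w(i := vi)) j) \<in> borel_measurable Pm"
      unfolding Pm_def I_def by (rule comp_meas_upd) simp_all
    have vi_upd: "\<And>w. (w(i := vi)) i = vi" by simp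
    have UtE: "Ut = (\<lambda>w. Et n \<alpha> \<rho> rL rH (gi vi i) T False (w(i := vi)))"
      using Et_eq[where \<alpha>=\<alpha> and n=n, OF a01] by (simp add: Ut_def fun_eq_iff)
    have Ut_meas: "Ut \<in> borel_measurable Pm" unfolding UtE
      by (rule Et_meas[where \<phi>="\<lambda>w. w(i := vi)" and g="gi vi i", OF comp gi_meas])
    have Ut_bd: "\<And>w. 0 \<le> Ut w \<and> Ut w \<le> real T * \<bar>vi\<bar>"
      unfolding Ut_def by (rule Ut_bounds[OF a01 rL0 rLH])
    have Ut_int: "integrable Pm Ut"
      by (rule integrable_bdd[OF psP Ut_meas, where B="real T * \<bar>vi\<bar>"]) (use Ut_bd in fastforce)
    have Ut_nn: "0 \<le> integral\<^sup>L Pm Ut" by (rule Bochner_Integration.integral_nonneg) (use Ut_bd in auto)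
    have aT: "0 \<le> real T * \<alpha> i * \<epsilon>" using a01[OF i] eps by simp
    have main: "integral\<^sup>L Pm Ud - real T * \<alpha> i * \<epsilon> \<le> integral\<^sup>L Pm Ut"
    proof (cases "integrable Pm Ud")
      case False
      thus ?thesis using Ut_nn aT by (simp add: not_integrable_integral_eq)
    next
      case Ud_int: True
      show ?thesis
      proof (cases s)
        case L
        have viL: "vi \<le> \<rho>" using vi L suppLrho by simp
        have ae: "AE w in Pm. \<forall>j\<in>I. w j \<le> \<rho>" unfolding Pm_def L using AEsupp[OF finI suppLrho] .
        have "AE w in Pm. Ud w \<le> Ut w"
          using ae
        proof eventually_elim
          case (elim w)
          have low: "\<forall>j<n. (w(i := vi)) j \<le> \<rho>" using elim viL by (auto simp: I_def)
          have "Ud w \<le> real T * S n \<alpha> (gi vi i) (w(i := vi)) rL" unfolding Ud_def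
            by (rule claimA'[where \<alpha>=\<alpha> and n=n and v="w(i := vi)" and vi=vi, OF a01 i vi_upd rLH])
          also have "\<dots> = Ut w" unfolding Ut_def
            by (rule truth_low[where \<alpha>=\<alpha> and n=n and \<rho>=\<rho> and rL=rL and rH=rH, OF a01 low trig_Nil, symmetric])
          finally show ?case .
        qed
        hence "integral\<^sup>L Pm Ud \<le> integral\<^sup>L Pm Ut" by (rule integral_mono_AE[OF Ud_int Ut_int])
        thus ?thesis using aT by linarith
      next
        case H
        define q where "q = (\<lambda>t w. pio n \<alpha> \<rho> i (w(i := vi)) ^ t)"
        have q_meas: "\<And>t. q t \<in> borel_measurable Pm" unfolding q_def
          by (rule pia_meas(2)[where \<phi>="\<lambda>w. w(i := vi)" and n=n, OF comp])
        have q_int: "\<And>t. integrable Pm (q t)"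
          by (rule integrable_bdd[OF psP q_meas, where B=1]) (use pio_bounds(1)[where \<alpha>=\<alpha> and n=n, OF a01] in \<open>auto simp: q_def\<close>)
        have q_val: "\<And>t. integral\<^sup>L Pm (q t) = (\<Prod>j\<in>I. 1 - (1 - (1 - \<alpha> j) ^ t) * p)"
        proof -
          fix t
          have "integral\<^sup>L Pm (q t) = (\<integral>w. (\<Prod>j\<in>I. if \<rho> < w j then (1 - \<alpha> j) ^ t else 1) \<partial>Pm)"
            unfolding q_def pio_upd[OF i] I_def ..
          also have "\<dots> = (\<Prod>j\<in>I. 1 - (1 - (1 - \<alpha> j) ^ t) * (1 - measure (valdist f H) {..\<rho>}))"
            unfolding Pm_def H by (rule int_prod_if[OF ps sets_valdist finI])
          finally show "integral\<^sup>L Pm (q t) = (\<Prod>j\<in>I. 1 - (1 - (1 - \<alpha> j) ^ t) * p)" by (simp add: cdfH)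
        qed
        have bnd: "\<And>w. Ud w \<le> Ut w + \<alpha> i * \<Delta> * (\<Sum>t<T. q t w)"
        proof -
          fix w :: "nat \<Rightarrow> real"
          have "Ud w \<le> real T * S n \<alpha> (gi vi i) (w(i := vi)) rH + (if trig \<rho> [] then 0 else \<alpha> i * (rH - rL) * (\<Sum>t<T. pio n \<alpha> \<rho> i (w(i := vi)) ^ t))"
            unfolding Ud_def by (rule claimA[where \<alpha>=\<alpha> and n=n and v="w(i := vi)" and vi=vi, OF a01 i vi_upd rLH])
          moreover have "real T * S n \<alpha> (gi vi i) (w(i := vi)) rH \<le> Ut w"
            unfolding Ut_def by (rule Ut_lower[OF a01 i rLH])
          ultimately show "Ud w \<le> Ut w + \<alpha> i * \<Delta> * (\<Sum>t<T. q t w)" by (simp add: q_def \<Delta>_def)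
        qed
        have "integral\<^sup>L Pm Ud \<le> (\<integral>w. Ut w + \<alpha> i * \<Delta> * (\<Sum>t<T. q t w) \<partial>Pm)"
          by (rule Bochner_Integration.integral_mono[OF Ud_int]) (use Ut_int q_int bnd in auto)
        also have "\<dots> = integral\<^sup>L Pm Ut + \<alpha> i * \<Delta> * (\<Sum>t<T. integral\<^sup>L Pm (q t))"
          using Ut_int q_int by (simp add: integral_sum)
        also have "(\<Sum>t<T. integral\<^sup>L Pm (q t)) \<le> 2 * real T / x"
          unfolding q_val by (rule numJ) (use i n2 in \<open>auto simp: I_def m_def\<close>)
        hence "\<alpha> i * \<Delta> * (\<Sum>t<T. integral\<^sup>L Pm (q t)) \<le> \<alpha> i * \<Delta> * (2 * real T / x)"
          using a01[OF i] Dpos by (intro mult_left_mono) auto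
        finally have "integral\<^sup>L Pm Ud \<le> integral\<^sup>L Pm Ut + \<alpha> i * (\<Delta> * (2 * real T / x))"
          by (simp add: mult.assoc)
        thus ?thesis unfolding DT by (simp add: mult_ac)
      qed
    qed
    thus "utility n \<alpha> (threshold_mech \<rho> rL rH) T f i vi s B' (\<lambda>_. truthful) - real T * \<alpha> i * \<epsilon>
        \<le> utility n \<alpha> (threshold_mech \<rho> rL rH) T f i vi s truthful (\<lambda>_. truthful)"
      unfolding uD uT .
  qed

  have REV: "\<forall>s. (revenue n \<alpha> (\<lambda>_. if s = L then rL else rH) 1 f s - \<epsilon>) * real T
               \<le> revenue n \<alpha> (threshold_mech \<rho> rL rH) T f s"
  proof
    fix s
    define Pm where "Pm = PiM {..<n} (\<lambda>_. valdist f s)"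
    define Rv where "Rv = (\<lambda>v. exp_total n \<alpha> (threshold_mech \<rho> rL rH) (\<lambda>_. truthful) v gr T [] (\<lambda>_. []))"
    define r1 where "r1 = (if s = L then rL else rH)"
    have rv: "revenue n \<alpha> (threshold_mech \<rho> rL rH) T f s = integral\<^sup>L Pm Rv"
      unfolding revenue_def gr_eq by (simp add: Rv_def Pm_def)
    have r1eq: "revenue n \<alpha> (\<lambda>_. if s = L then rL else rH) 1 f s = (\<integral>v. S n \<alpha> gr v r1 \<partial>Pm)"
    proof -
      have eq1: "\<And>v. exp_total n \<alpha> (\<lambda>_. if s = L then rL else rH) (\<lambda>_. truthful) v gr 1 [] (\<lambda>_. []) = S n \<alpha> gr v r1"
        by (simp add: exp_total_one[where \<alpha>=\<alpha> and n=n, OF a01] r1_def del: exp_total.simps)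
      show ?thesis unfolding revenue_def gr_eq Pm_def by (simp only: eq1)
    qed
    have psP: "prob_space Pm" unfolding Pm_def by (rule prob_space_PiM) (rule ps)
    have comp: "\<And>j. j < n \<Longrightarrow> (\<lambda>w. w j) \<in> borel_measurable Pm"
      unfolding Pm_def by (rule comp_meas) simp_all
    have RvE: "Rv = (\<lambda>v. Et n \<alpha> \<rho> rL rH gr T False v)"
      using Et_eq[where \<alpha>=\<alpha> and n=n, OF a01] by (simp add: Rv_def fun_eq_iff)
    have Rv_meas: "Rv \<in> borel_measurable Pm" unfolding RvE
      by (rule Et_meas[where \<phi>="\<lambda>w. w" and g=gr and n=n, OF comp gr_meas])
    have S_meas': "\<And>r. (\<lambda>v. S n \<alpha> gr v r) \<in> borel_measurable Pm"
      by (rule S_meas[where \<phi>="\<lambda>w. w" and g=gr and n=n, OF comp gr_meas])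
    have Rv_bd: "\<And>v. 0 \<le> Rv v \<and> Rv v \<le> real T * (S n \<alpha> gr v rH + rH)"
      unfolding Rv_def by (rule Rv_bounds[OF a01 rL0 rLH])
    have Rv_nn: "0 \<le> integral\<^sup>L Pm Rv" by (rule Bochner_Integration.integral_nonneg) (use Rv_bd in auto)
    have eT: "0 \<le> \<epsilon> * real T" using eps by simp
    have main: "((\<integral>v. S n \<alpha> gr v r1 \<partial>Pm) - \<epsilon>) * real T \<le> integral\<^sup>L Pm Rv"
    proof (cases s)
      case L
      have ae: "AE v in Pm. \<forall>j\<in>{..<n}. v j \<le> \<rho>" unfolding Pm_def L using AEsupp[OF _ suppLrho] by simp
      have "AE v in Pm. Rv v = real T * S n \<alpha> gr v rL"
        using ae
      proof eventually_elim
        case (elim v)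
        have low: "\<forall>j<n. v j \<le> \<rho>" using elim by auto
        show ?case unfolding Rv_def by (rule truth_low[where \<alpha>=\<alpha> and n=n and \<rho>=\<rho> and rL=rL and rH=rH, OF a01 low trig_Nil])
      qed
      hence "integral\<^sup>L Pm Rv = (\<integral>v. real T * S n \<alpha> gr v rL \<partial>Pm)"
        by (intro integral_cong_AE Rv_meas borel_measurable_times borel_measurable_const S_meas')
      also have "\<dots> = real T * (\<integral>v. S n \<alpha> gr v rL \<partial>Pm)" by simp
      finally show ?thesis using eT by (simp add: r1_def L algebra_simps)
    next
      case H
      show ?thesis
      proof (cases "integrable Pm (\<lambda>v. S n \<alpha> gr v rH)")
        case False
        thus ?thesis using Rv_nn eT by (simp add: r1_def H not_integrable_integral_eq)
      next
        case Sint: True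
        define q where "q = (\<lambda>t v. pia n \<alpha> \<rho> v ^ t)"
        have q_meas: "\<And>t. q t \<in> borel_measurable Pm" unfolding q_def
          by (rule pia_meas(1)[where \<phi>="\<lambda>w. w" and n=n, OF comp])
        have q_int: "\<And>t. integrable Pm (q t)"
          by (rule integrable_bdd[OF psP q_meas, where B=1]) (use pio_bounds(2)[where \<alpha>=\<alpha> and n=n, OF a01] in \<open>auto simp: q_def\<close>)
        have q_val: "\<And>t. integral\<^sup>L Pm (q t) = (\<Prod>j\<in>{..<n}. 1 - (1 - (1 - \<alpha> j) ^ t) * p)"
        proof -
          fix t
          have "integral\<^sup>L Pm (q t) = (\<integral>w. (\<Prod>j\<in>{..<n}. if \<rho> < w j then (1 - \<alpha> j) ^ t else 1) \<partial>Pm)"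
            unfolding q_def pia_pow ..
          also have "\<dots> = (\<Prod>j\<in>{..<n}. 1 - (1 - (1 - \<alpha> j) ^ t) * (1 - measure (valdist f H) {..\<rho>}))"
            unfolding Pm_def H by (rule int_prod_if[OF ps sets_valdist]) simp
          finally show "integral\<^sup>L Pm (q t) = (\<Prod>j\<in>{..<n}. 1 - (1 - (1 - \<alpha> j) ^ t) * p)" by (simp add: cdfH)
        qed
        have Rv_int: "integrable Pm Rv"
        proof (rule Bochner_Integration.integrable_bound[OF _ Rv_meas])
          show "integrable Pm (\<lambda>v. real T * (S n \<alpha> gr v rH + rH))" using Sint psP
            by (intro integrable_mult_right Bochner_Integration.integrable_add) (auto simp: prob_space.finite_measure finite_measure.integrable_const)
          show "AE v in Pm. norm (Rv v) \<le> norm (real T * (S n \<alpha> gr v rH + rH))"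
          proof (rule AE_I2)
            fix v
            have "0 \<le> Rv v" "Rv v \<le> real T * (S n \<alpha> gr v rH + rH)" using Rv_bd[of v] by auto
            thus "norm (Rv v) \<le> norm (real T * (S n \<alpha> gr v rH + rH))" by simp
          qed
        qed
        have bnd: "\<And>v. real T * S n \<alpha> gr v rH - \<Delta> * (\<Sum>t<T. q t v) \<le> Rv v"
        proof -
          fix v :: "nat \<Rightarrow> real"
          have "real T * S n \<alpha> gr v rH - (if trig \<rho> [] then 0 else (rH - rL) * (\<Sum>t<T. pia n \<alpha> \<rho> v ^ t)) \<le> Rv v"
            unfolding Rv_def by (rule claimC[where \<alpha>=\<alpha> and n=n, OF a01 rL0 rLH])
          thus "real T * S n \<alpha> gr v rH - \<Delta> * (\<Sum>t<T. q t v) \<le> Rv v" by (simp add: q_def \<Delta>_def)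
        qed
        have "real T * (\<integral>v. S n \<alpha> gr v rH \<partial>Pm) - \<Delta> * (\<Sum>t<T. integral\<^sup>L Pm (q t))
            = (\<integral>v. real T * S n \<alpha> gr v rH - \<Delta> * (\<Sum>t<T. q t v) \<partial>Pm)"
          using Sint q_int by (simp add: integral_sum)
        also have "\<dots> \<le> integral\<^sup>L Pm Rv"
          by (rule Bochner_Integration.integral_mono[OF _ Rv_int]) (use Sint q_int bnd in auto)
        finally have 1: "real T * (\<integral>v. S n \<alpha> gr v rH \<partial>Pm) - \<Delta> * (\<Sum>t<T. integral\<^sup>L Pm (q t)) \<le> integral\<^sup>L Pm Rv" .
        have "(\<Sum>t<T. integral\<^sup>L Pm (q t)) \<le> 2 * real T / x"
          unfolding q_val by (rule numJ) (auto simp: m_def)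
        hence "\<Delta> * (\<Sum>t<T. integral\<^sup>L Pm (q t)) \<le> \<Delta> * (2 * real T / x)"
          using Dpos by (intro mult_left_mono) auto
        thus ?thesis using 1 unfolding DT by (simp add: r1_def H algebra_simps)
      qed
    qed
    thus "(revenue n \<alpha> (\<lambda>_. if s = L then rL else rH) 1 f s - \<epsilon>) * real T
               \<le> revenue n \<alpha> (threshold_mech \<rho> rL rH) T f s"
      unfolding rv r1eq .
  qed
  show ?thesis using IC REV by blast
qed

end
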